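(* Consider the robust Bayesian persuasion setting described in the context with $n=3$ states and the uniform prior $\mu=(\frac13,\frac13,\frac13)$. Then $\mathrm{Reg}_{\mathrm{AR}}=\frac{1}{2}$.
   Context: Setting: a finite state space $\Omega=[n]=\{1,\dots,n\}$ and a publicly known prior $\mu\in\Delta(\Omega)$ with $\mu_i>0$ for all $i$. A signaling scheme is a stochastic map $\pi$ from $\Omega$ to a (finite or infinite) signal set $S$; Sender commits to $\pi$, the state $\omega\sim\mu$ is drawn, a signal $s\sim\pi(\omega)$ is sent, and Receiver forms the Bayesian posterior $p(s)\in\Delta(\Omega)$. Receiver has actions $\{0,1\}$ (reject/adopt) and utility $u_r:\Omega\times\{0,1\}\to\mathbb{R}$ with $u_r(i,0)=0$ for all $i$; Receiver adopts at posterior $p$ iff $\mathbb{E}_{\omega'\sim p}[u_r(\omega',1)]\ge 0$ (ties broken in favor of adoption). Sender's utility from $\pi$ is $u(\pi,u_r)=\Pr_{s}[\text{Receiver adopts at } p(s)]$. Let $u^*(u_r)=\sup_\pi u(\pi,u_r)$. For a class $\mathcal{U}$ of Receiver utilities, $\mathrm{Reg}(\pi)=\sup_{u_r\in\mathcal{U}}\{u^*(u_r)-u(\pi,u_r)\}$ and $\mathrm{Reg}=\inf_\pi \mathrm{Reg}(\pi)$. $\mathrm{Reg}_{\mathrm{AR}}$ denotes this regret when $\mathcal{U}$ is the class of all Receiver utility functions. *)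

theory Defs
  imports "HOL-Probability.Probability"
begin

text \<open>States are 1..n (type nat). A Receiver utility is represented by the function
  i \<mapsto> u_r(i,1); u_r(i,0) = 0 is built in. The class of all Receiver utilities is
  therefore the set of all functions nat \<Rightarrow> real (only values on 1..n matter).
  A signaling scheme is a stochastic map from states to a signal space; we take the
  signal space to be the reals with the Borel sigma-algebra (which contains every finite
  and countable signal set, and continuum-size ones), so a scheme assigns to each state i
  a Borel probability measure pi i on the reals.\<close>

type_synonym scheme = "nat \<Rightarrow> real measure"

definition is_scheme :: "nat \<Rightarrow> scheme \<Rightarrow> bool" where
  "is_scheme n \<pi> \<longleftrightarrow>
     (\<forall>i\<in>{1..n}. prob_space (\<pi> i) \<and> sets (\<pi> i) = sets (borel :: real measure))"

definition signal_dist :: "nat \<Rightarrow> (nat \<Rightarrow> real) \<Rightarrow> scheme \<Rightarrow> real measure" where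
  "signal_dist n \<mu> \<pi> =
     measure_of UNIV (sets (borel :: real measure))
       (\<lambda>A. \<Sum>i\<in>{1..n}. ennreal (\<mu> i) * emeasure (\<pi> i) A)"

definition posterior :: "nat \<Rightarrow> (nat \<Rightarrow> real) \<Rightarrow> scheme \<Rightarrow> real \<Rightarrow> nat \<Rightarrow> real" where
  "posterior n \<mu> \<pi> s i =
     (let \<nu> = signal_dist n \<mu> \<pi> in
      if i \<in> {1..n} then
        \<mu> i * enn2real (RN_deriv \<nu> (\<pi> i) s) /
          (\<Sum>j\<in>{1..n}. \<mu> j * enn2real (RN_deriv \<nu> (\<pi> j) s))
      else 0)"

definition adopts :: "nat \<Rightarrow> (nat \<Rightarrow> real) \<Rightarrow> (nat \<Rightarrow> real) \<Rightarrow> bool" where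
  "adopts n u p \<longleftrightarrow> (\<Sum>i\<in>{1..n}. p i * u i) \<ge> 0"

definition sender_util :: "nat \<Rightarrow> (nat \<Rightarrow> real) \<Rightarrow> scheme \<Rightarrow> (nat \<Rightarrow> real) \<Rightarrow> real" where
  "sender_util n \<mu> \<pi> u =
     measure (signal_dist n \<mu> \<pi>) {s. adopts n u (posterior n \<mu> \<pi> s)}"

definition opt_util :: "nat \<Rightarrow> (nat \<Rightarrow> real) \<Rightarrow> (nat \<Rightarrow> real) \<Rightarrow> real" where
  "opt_util n \<mu> u = (SUP \<pi>\<in>{\<pi>. is_scheme n \<pi>}. sender_util n \<mu> \<pi> u)"

definition regret_AR :: "nat \<Rightarrow> (nat \<Rightarrow> real) \<Rightarrow> scheme \<Rightarrow> real" where
  "regret_AR n \<mu> \<pi> = (SUP u\<in>(UNIV :: (nat \<Rightarrow> real) set). opt_util n \<mu> u - sender_util n \<mu> \<pi> u)"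

definition Reg_AR :: "nat \<Rightarrow> (nat \<Rightarrow> real) \<Rightarrow> real" where
  "Reg_AR n \<mu> = (INF \<pi>\<in>{\<pi>. is_scheme n \<pi>}. regret_AR n \<mu> \<pi>)"

end

theory Submission
  imports Defs
begin

lemma sets_signal_dist[simp]: "sets (signal_dist n \<mu> \<pi>) = sets (borel :: real measure)"
  unfolding signal_dist_def
  using sets.sigma_sets_eq[of "borel::real measure"] by (simp add: sets_measure_of_conv)

lemma space_signal_dist[simp]: "space (signal_dist n \<mu> \<pi>) = UNIV"
  using sets_eq_imp_space_eq[OF sets_signal_dist] by simp

lemma emeasure_signal_dist:
  assumes sch: "is_scheme n \<pi>" and A: "A \<in> sets borel"
  shows "emeasure (signal_dist n \<mu> \<pi>) A = (\<Sum>i\<in>{1..n}. ennreal (\<mu> i) * emeasure (\<pi> i) A)"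
  unfolding signal_dist_def
proof (rule emeasure_measure_of_sigma)
  show "sigma_algebra UNIV (sets (borel::real measure))"
    using sets.sigma_algebra_axioms[of "borel::real measure"] by simp
  show "positive (sets borel) (\<lambda>A. \<Sum>i\<in>{1..n}. ennreal (\<mu> i) * emeasure (\<pi> i) A)"
    by (simp add: positive_def)
  show "countably_additive (sets borel) (\<lambda>A. \<Sum>i\<in>{1..n}. ennreal (\<mu> i) * emeasure (\<pi> i) A)"
    unfolding countably_additive_def
  proof (intro allI impI)
    fix F :: "nat \<Rightarrow> real set"
    assume F: "range F \<subseteq> sets borel" "disjoint_family F" "\<Union> (range F) \<in> sets borel"
    have "(\<Sum>k. \<Sum>i\<in>{1..n}. ennreal (\<mu> i) * emeasure (\<pi> i) (F k))
        = (\<Sum>i\<in>{1..n}. \<Sum>k. ennreal (\<mu> i) * emeasure (\<pi> i) (F k))"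
      by (rule suminf_sum) (rule summableI)
    also have "\<dots> = (\<Sum>i\<in>{1..n}. ennreal (\<mu> i) * emeasure (\<pi> i) (\<Union> (range F)))"
    proof (rule sum.cong[OF refl])
      fix i assume i: "i \<in> {1..n}"
      have se: "sets (\<pi> i) = sets borel" using sch i unfolding is_scheme_def by auto
      show "(\<Sum>k. ennreal (\<mu> i) * emeasure (\<pi> i) (F k)) = ennreal (\<mu> i) * emeasure (\<pi> i) (\<Union> (range F))"
        using suminf_emeasure[of F "\<pi> i"] F se by (simp add: ennreal_suminf_cmult)
    qed
    finally show "(\<Sum>k. \<Sum>i\<in>{1..n}. ennreal (\<mu> i) * emeasure (\<pi> i) (F k)) =
         (\<Sum>i\<in>{1..n}. ennreal (\<mu> i) * emeasure (\<pi> i) (\<Union> (range F)))" .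
  qed
qed (use A in simp)

lemma ennreal_three_third: "(3::ennreal) * (1/3) = 1"
  by (metis divide_ennreal_def ennreal_divide_self ennreal_times_divide mult.right_neutral numeral_neq_zero ennreal_numeral_less_top)

abbreviation "mu3 \<equiv> (\<lambda>_::nat. 1/3 :: real)"
abbreviation "nu \<pi> \<equiv> signal_dist 3 mu3 \<pi>"

lemma scheme_sets: "is_scheme n \<pi> \<Longrightarrow> i \<in> {1..n} \<Longrightarrow> sets (\<pi> i) = sets borel"
  unfolding is_scheme_def by auto

lemma scheme_prob: "is_scheme n \<pi> \<Longrightarrow> i \<in> {1..n} \<Longrightarrow> prob_space (\<pi> i)"
  unfolding is_scheme_def by auto

lemma scheme_UNIV: "is_scheme n \<pi> \<Longrightarrow> i \<in> {1..n} \<Longrightarrow> emeasure (\<pi> i) UNIV = 1"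
  using scheme_prob[of n \<pi> i] scheme_sets[of n \<pi> i] prob_space.emeasure_space_1[of "\<pi> i"]
    sets_eq_imp_space_eq[of "\<pi> i" borel] by simp

lemma nu_emeasure: "is_scheme 3 \<pi> \<Longrightarrow> A \<in> sets borel \<Longrightarrow>
   emeasure (nu \<pi>) A = (\<Sum>i\<in>{1..3}. ennreal (1/3) * emeasure (\<pi> i) A)"
  by (rule emeasure_signal_dist)

lemma nu_prob: assumes "is_scheme 3 \<pi>" shows "prob_space (nu \<pi>)"
proof
  have "emeasure (nu \<pi>) UNIV = (\<Sum>i\<in>{1..3::nat}. ennreal (1/3) * 1)"
    using nu_emeasure[OF assms, of UNIV] scheme_UNIV[OF assms] by simp
  also have "\<dots> = 1" using ennreal_three_third by (simp add: ennreal_divide_numeral[symmetric])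
  finally show "emeasure (nu \<pi>) (space (nu \<pi>)) = 1" by simp
qed


lemma nu_sfin: "is_scheme 3 \<pi> \<Longrightarrow> sigma_finite_measure (nu \<pi>)"
  using nu_prob prob_space_imp_sigma_finite by blast

lemma nu_ac: assumes sch: "is_scheme 3 \<pi>" and i: "i \<in> {1..3}"
  shows "absolutely_continuous (nu \<pi>) (\<pi> i)"
  unfolding absolutely_continuous_def
proof
  fix A assume A: "A \<in> null_sets (nu \<pi>)"
  then have Ab: "A \<in> sets borel" and z: "emeasure (nu \<pi>) A = 0" by auto
  have "(\<Sum>j\<in>{1..3}. ennreal (1/3) * emeasure (\<pi> j) A) = 0"
    using z nu_emeasure[OF sch Ab] by simp
  then have "ennreal (1/3) * emeasure (\<pi> i) A = 0"
    using i by (subst (asm) sum_eq_0_iff) auto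
  then have "emeasure (\<pi> i) A = 0" by simp
  then show "A \<in> null_sets (\<pi> i)" using Ab scheme_sets[OF sch i] by auto
qed

lemma nu_RN: assumes sch: "is_scheme 3 \<pi>" and i: "i \<in> {1..3}"
  shows "density (nu \<pi>) (RN_deriv (nu \<pi>) (\<pi> i)) = \<pi> i"
  using sigma_finite_measure.density_RN_deriv[OF nu_sfin[OF sch] nu_ac[OF sch i]] scheme_sets[OF sch i]
  by simp

lemma nu_RN_emeasure: assumes sch: "is_scheme 3 \<pi>" and i: "i \<in> {1..3}" and A: "A \<in> sets borel"
  shows "(\<integral>\<^sup>+s. RN_deriv (nu \<pi>) (\<pi> i) s * indicator A s \<partial>nu \<pi>) = emeasure (\<pi> i) A"
proof -
  have "emeasure (density (nu \<pi>) (RN_deriv (nu \<pi>) (\<pi> i))) A = (\<integral>\<^sup>+s. RN_deriv (nu \<pi>) (\<pi> i) s * indicator A s \<partial>nu \<pi>)"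
    using A by (intro emeasure_density) auto
  then show ?thesis using nu_RN[OF sch i] by simp
qed

lemma AE_sum_one: assumes sch: "is_scheme 3 \<pi>"
  shows "AE s in nu \<pi>. (\<Sum>i\<in>{1..3}. ennreal (1/3) * RN_deriv (nu \<pi>) (\<pi> i) s) = 1"
proof -
  have "density (nu \<pi>) (\<lambda>s. \<Sum>i\<in>{1..3}. ennreal (1/3) * RN_deriv (nu \<pi>) (\<pi> i) s) = density (nu \<pi>) (\<lambda>_. 1)"
  proof (rule measure_eqI)
    fix A assume "A \<in> sets (density (nu \<pi>) (\<lambda>s. \<Sum>i\<in>{1..3}. ennreal (1/3) * RN_deriv (nu \<pi>) (\<pi> i) s))"
    then have A: "A \<in> sets borel" by simp
    have "emeasure (density (nu \<pi>) (\<lambda>s. \<Sum>i\<in>{1..3}. ennreal (1/3) * RN_deriv (nu \<pi>) (\<pi> i) s)) A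
        = (\<integral>\<^sup>+s. (\<Sum>i\<in>{1..3}. ennreal (1/3) * RN_deriv (nu \<pi>) (\<pi> i) s) * indicator A s \<partial>nu \<pi>)"
      using A by (intro emeasure_density) auto
    also have "\<dots> = (\<integral>\<^sup>+s. (\<Sum>i\<in>{1..3}. ennreal (1/3) * (RN_deriv (nu \<pi>) (\<pi> i) s * indicator A s)) \<partial>nu \<pi>)"
      by (simp add: sum_distrib_right mult.assoc)
    also have "\<dots> = (\<Sum>i\<in>{1..3}. ennreal (1/3) * (\<integral>\<^sup>+s. RN_deriv (nu \<pi>) (\<pi> i) s * indicator A s \<partial>nu \<pi>))"
    proof -
      have A'[measurable]: "A \<in> sets (nu \<pi>)" using A by simp
      show ?thesis by (subst nn_integral_sum) (auto simp: nn_integral_cmult)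
    qed
    also have "\<dots> = (\<Sum>i\<in>{1..3}. ennreal (1/3) * emeasure (\<pi> i) A)"
      using nu_RN_emeasure[OF sch _ A] by simp
    also have "\<dots> = emeasure (nu \<pi>) A" using nu_emeasure[OF sch A] by simp
    also have "\<dots> = emeasure (density (nu \<pi>) (\<lambda>_. 1)) A" by (simp add: density_1)
    finally show "emeasure (density (nu \<pi>) (\<lambda>s. \<Sum>i\<in>{1..3}. ennreal (1/3) * RN_deriv (nu \<pi>) (\<pi> i) s)) A = emeasure (density (nu \<pi>) (\<lambda>_. 1)) A" .
  qed simp
  then show ?thesis
    using sigma_finite_measure.density_unique_iff[OF nu_sfin[OF sch]] by simp
qed


lemma enn3: fixes x y z :: ennreal assumes "x+y+z=1" shows "x \<le> 1" "y \<le> 1" "z \<le> 1"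
  using assms by (metis add.assoc add.commute le_iff_add)+

definition qp :: "scheme \<Rightarrow> nat \<Rightarrow> real \<Rightarrow> real" where
  "qp \<pi> i s = 1/3 * enn2real (RN_deriv (nu \<pi>) (\<pi> i) s)"

lemma qp_nonneg: "qp \<pi> i s \<ge> 0"
  unfolding qp_def by simp

lemma qp_measurable[measurable]: "qp \<pi> i \<in> borel_measurable borel"
proof -
  have "(\<lambda>s. 1/3 * enn2real (RN_deriv (nu \<pi>) (\<pi> i) s)) \<in> borel_measurable (nu \<pi>)" by measurable
  then show ?thesis unfolding qp_def[abs_def] by (simp cong: measurable_cong_sets)
qed

lemma qp_meas_nu[measurable]: "qp \<pi> i \<in> borel_measurable (nu \<pi>)"
  unfolding qp_def[abs_def] by measurable

lemma three_set: "{1..3::nat} = {1,2,3}" by auto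

lemma AE_post: assumes sch: "is_scheme 3 \<pi>"
  shows "AE s in nu \<pi>. (\<forall>i\<in>{1..3}. posterior 3 mu3 \<pi> s i = qp \<pi> i s) \<and> (\<Sum>i\<in>{1..3}. qp \<pi> i s) = 1"
  using AE_sum_one[OF sch]
proof eventually_elim
  case (elim s)
  let ?R = "\<lambda>i. RN_deriv (nu \<pi>) (\<pi> i) s"
  have e: "ennreal (1/3) * ?R 1 + ennreal (1/3) * ?R 2 + ennreal (1/3) * ?R 3 = 1"
    using elim unfolding three_set by (simp add: add.assoc)
  have f: "?R i < top" if "i \<in> {1,2,3}" for i
  proof -
    have "ennreal (1/3) * ?R i \<le> 1"
      using enn3[OF e] that by auto
    then have "ennreal (1/3) * ?R i < top" using le_less_trans by fastforce
    then show ?thesis by (auto simp add: ennreal_mult_less_top)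
  qed
  have "enn2real (ennreal (1/3) * ?R 1 + ennreal (1/3) * ?R 2 + ennreal (1/3) * ?R 3) = 1"
    using e by simp
  then have sum1: "qp \<pi> 1 s + qp \<pi> 2 s + qp \<pi> 3 s = 1"
    using f unfolding qp_def
    by (simp add: enn2real_plus ennreal_mult_less_top enn2real_mult)
  have ssum: "(\<Sum>i\<in>{1..3}. qp \<pi> i s) = 1" using sum1 unfolding three_set by (simp add: add.assoc)
  have den: "(\<Sum>j\<in>{1..3}. 1/3 * enn2real (RN_deriv (nu \<pi>) (\<pi> j) s)) = 1" using ssum unfolding qp_def .
  have "posterior 3 mu3 \<pi> s i = qp \<pi> i s" if "i \<in> {1..3}" for i
    using that unfolding posterior_def Let_def den by (simp add: qp_def)
  then show ?case using ssum by blast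
qed


lemma qp_integral_le: assumes sch: "is_scheme 3 \<pi>" and i: "i \<in> {1..3}"
  shows "(\<integral>\<^sup>+s. ennreal (qp \<pi> i s) \<partial>nu \<pi>) \<le> ennreal (1/3)"
proof -
  have "(\<integral>\<^sup>+s. ennreal (qp \<pi> i s) \<partial>nu \<pi>) \<le> (\<integral>\<^sup>+s. ennreal (1/3) * RN_deriv (nu \<pi>) (\<pi> i) s \<partial>nu \<pi>)"
  proof (rule nn_integral_mono)
    fix s
    have "ennreal (enn2real (RN_deriv (nu \<pi>) (\<pi> i) s)) \<le> RN_deriv (nu \<pi>) (\<pi> i) s"
      by (cases "RN_deriv (nu \<pi>) (\<pi> i) s") auto
    moreover have "ennreal (qp \<pi> i s) = ennreal (1/3) * ennreal (enn2real (RN_deriv (nu \<pi>) (\<pi> i) s))"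
      unfolding qp_def by (rule ennreal_mult) auto
    ultimately show "ennreal (qp \<pi> i s) \<le> ennreal (1/3) * RN_deriv (nu \<pi>) (\<pi> i) s"
      by (simp add: mult_left_mono)
  qed
  also have "\<dots> = ennreal (1/3) * (\<integral>\<^sup>+s. RN_deriv (nu \<pi>) (\<pi> i) s * indicator UNIV s \<partial>nu \<pi>)"
    by (simp add: nn_integral_cmult)
  also have "\<dots> = ennreal (1/3)"
    using nu_RN_emeasure[OF sch i, of UNIV] scheme_UNIV[OF sch i] by simp
  finally show ?thesis .
qed

lemma adopt_set_measurable[measurable]:
  "{s. adopts 3 u (posterior 3 mu3 \<pi> s)} \<in> sets (nu \<pi>)"
proof -
  have m: "(\<lambda>s. posterior 3 mu3 \<pi> s i) \<in> borel_measurable (nu \<pi>)" for i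
  proof (cases "i \<in> {1..3}")
    case True
    then show ?thesis unfolding posterior_def Let_def by simp
  next
    case False
    then show ?thesis unfolding posterior_def Let_def by simp
  qed
  have "(\<lambda>s. \<Sum>i\<in>{1..3}. posterior 3 mu3 \<pi> s i * u i) \<in> borel_measurable (nu \<pi>)"
    using m by measurable
  then have "{s \<in> space (nu \<pi>). 0 \<le> (\<Sum>i\<in>{1..3}. posterior 3 mu3 \<pi> s i * u i)} \<in> sets (nu \<pi>)"
    by measurable
  then show ?thesis unfolding adopts_def by simp
qed

lemma su_cert:
  assumes sch: "is_scheme 3 \<pi>" and c: "\<And>i. i \<in> {1..3} \<Longrightarrow> c i \<ge> 0"
    and cert: "\<And>p. (\<And>i. i \<in> {1..3} \<Longrightarrow> p i \<ge> 0) \<Longrightarrow> (\<Sum>i\<in>{1..3}. p i) = 1 \<Longrightarrow>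
                 (\<Sum>i\<in>{1..3}. p i * u i) \<ge> 0 \<Longrightarrow> (\<Sum>i\<in>{1..3}. p i * c i) \<ge> 1"
  shows "sender_util 3 mu3 \<pi> u \<le> (\<Sum>i\<in>{1..3}. c i) / 3"
proof -
  let ?A = "{s. adopts 3 u (posterior 3 mu3 \<pi> s)}"
  interpret P: prob_space "nu \<pi>" using nu_prob[OF sch] .
  have "emeasure (nu \<pi>) ?A = (\<integral>\<^sup>+s. indicator ?A s \<partial>nu \<pi>)"
    using adopt_set_measurable[of u \<pi>] by (simp add: nn_integral_indicator)
  also have "\<dots> \<le> (\<integral>\<^sup>+s. (\<Sum>i\<in>{1..3}. ennreal (c i) * ennreal (qp \<pi> i s)) \<partial>nu \<pi>)"
  proof (rule nn_integral_mono_AE)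
    show "AE s in nu \<pi>. indicator ?A s \<le> (\<Sum>i\<in>{1..3}. ennreal (c i) * ennreal (qp \<pi> i s))"
      using AE_post[OF sch]
    proof eventually_elim
      case (elim s)
      show ?case
      proof (cases "s \<in> ?A")
        case True
        then have "(\<Sum>i\<in>{1..3}. qp \<pi> i s * u i) \<ge> 0"
          using elim unfolding adopts_def by simp
        then have "(\<Sum>i\<in>{1..3}. qp \<pi> i s * c i) \<ge> 1"
          using cert[of "\<lambda>i. qp \<pi> i s"] elim qp_nonneg by blast
        then have "ennreal 1 \<le> ennreal (\<Sum>i\<in>{1..3}. qp \<pi> i s * c i)" by (rule ennreal_leI)
        also have "\<dots> = (\<Sum>i\<in>{1..3}. ennreal (qp \<pi> i s * c i))"
          by (rule sum_ennreal[symmetric]) (use c qp_nonneg in auto)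
        also have "\<dots> = (\<Sum>i\<in>{1..3}. ennreal (c i) * ennreal (qp \<pi> i s))"
          by (rule sum.cong) (use c qp_nonneg in \<open>auto simp: ennreal_mult mult.commute\<close>)
        finally show ?thesis using True by simp
      qed simp
    qed
  qed
  also have "\<dots> = (\<Sum>i\<in>{1..3}. ennreal (c i) * (\<integral>\<^sup>+s. ennreal (qp \<pi> i s) \<partial>nu \<pi>))"
    by (subst nn_integral_sum) (auto simp: nn_integral_cmult)
  also have "\<dots> \<le> (\<Sum>i\<in>{1..3}. ennreal (c i) * ennreal (1/3))"
    by (intro sum_mono mult_left_mono qp_integral_le[OF sch]) auto
  also have "\<dots> = ennreal ((\<Sum>i\<in>{1..3}. c i) / 3)"
  proof -
    have "(\<Sum>i\<in>{1..3}. ennreal (c i) * ennreal (1/3)) = (\<Sum>i\<in>{1..3}. ennreal (c i / 3))"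
      using c by (intro sum.cong) (auto simp: ennreal_mult[symmetric])
    also have "\<dots> = ennreal (\<Sum>i\<in>{1..3}. c i / 3)"
      by (rule sum_ennreal) (use c in auto)
    finally show ?thesis by (simp add: sum_divide_distrib)
  qed
  finally have "emeasure (nu \<pi>) ?A \<le> ennreal ((\<Sum>i\<in>{1..3}. c i) / 3)" .
  moreover have nn: "0 \<le> (\<Sum>i\<in>{1..3}. c i) / 3" using c by (intro divide_nonneg_pos sum_nonneg) auto
  ultimately show ?thesis
    unfolding sender_util_def P.emeasure_eq_measure using ennreal_le_iff[OF nn] by blast
qed

lemma su_le_1: "is_scheme 3 \<pi> \<Longrightarrow> sender_util 3 mu3 \<pi> u \<le> 1"
  using su_cert[of \<pi> "\<lambda>_. 1" u] by (simp add: three_set)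

lemma su_nonneg: "sender_util 3 mu3 \<pi> u \<ge> 0"
  unfolding sender_util_def by simp

lemma su_disjoint:
  assumes sch: "is_scheme 3 \<pi>"
    and dis: "\<And>p. (\<And>i. i \<in> {1..3} \<Longrightarrow> p i \<ge> 0) \<Longrightarrow> (\<Sum>i\<in>{1..3}. p i) = 1 \<Longrightarrow>
                 (\<Sum>i\<in>{1..3}. p i * u i) \<ge> 0 \<Longrightarrow> (\<Sum>i\<in>{1..3}. p i * v i) \<ge> 0 \<Longrightarrow> False"
  shows "sender_util 3 mu3 \<pi> u + sender_util 3 mu3 \<pi> v \<le> 1"
proof -
  let ?A = "{s. adopts 3 u (posterior 3 mu3 \<pi> s)}"
  let ?B = "{s. adopts 3 v (posterior 3 mu3 \<pi> s)}"
  interpret P: prob_space "nu \<pi>" using nu_prob[OF sch] .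
  have A: "?A \<in> sets (nu \<pi>)" and B: "?B \<in> sets (nu \<pi>)" by (rule adopt_set_measurable)+
  have "AE s in nu \<pi>. \<not> (s \<in> ?A \<inter> ?B)"
    using AE_post[OF sch]
  proof eventually_elim
    case (elim s)
    show ?case
    proof
      assume "s \<in> ?A \<inter> ?B"
      then have "(\<Sum>i\<in>{1..3}. qp \<pi> i s * u i) \<ge> 0" "(\<Sum>i\<in>{1..3}. qp \<pi> i s * v i) \<ge> 0"
        using elim unfolding adopts_def by auto
      then show False using dis[of "\<lambda>i. qp \<pi> i s"] elim qp_nonneg by blast
    qed
  qed
  note ae = this
  have z: "emeasure (nu \<pi>) (?A \<inter> ?B) = 0"
  proof -
    have eq: "{s \<in> space (nu \<pi>). s \<in> ?A \<inter> ?B} = ?A \<inter> ?B" by auto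
    show ?thesis using emeasure_eq_0_AE[OF ae] unfolding eq .
  qed
  have "emeasure (nu \<pi>) ?A + emeasure (nu \<pi>) ?B = emeasure (nu \<pi>) (?A \<union> ?B) + emeasure (nu \<pi>) (?A \<inter> ?B)"
    by (rule emeasure_Un_Int[OF A B])
  also have "\<dots> \<le> 1" using P.emeasure_le_1[of "?A \<union> ?B"] unfolding z by simp
  finally have "ennreal (P.prob ?A) + ennreal (P.prob ?B) \<le> ennreal 1"
    unfolding P.emeasure_eq_measure by simp
  then have "ennreal (P.prob ?A + P.prob ?B) \<le> ennreal 1"
    by (subst ennreal_plus) auto
  then show ?thesis unfolding sender_util_def by (subst (asm) ennreal_le_iff) auto
qed

definition mk :: "(nat \<Rightarrow> real \<Rightarrow> real) \<Rightarrow> scheme" where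
  "mk g = (\<lambda>i. density lborel (\<lambda>s. ennreal (g i s) * indicator {0..<1} s))"

locale gsch =
  fixes g :: "nat \<Rightarrow> real \<Rightarrow> real"
  assumes meas[measurable]: "\<And>i. g i \<in> borel_measurable borel"
    and nonneg: "\<And>i s. g i s \<ge> 0"
    and int1: "\<And>i. i \<in> {1..3} \<Longrightarrow> (\<integral>\<^sup>+s. ennreal (g i s) * indicator {0..<1} s \<partial>lborel) = 1"
    and sum3: "\<And>s. s \<in> {0..<1} \<Longrightarrow> (\<Sum>i\<in>{1..3}. g i s) = 3"
begin

lemma scheme: "is_scheme 3 (mk g)"
  unfolding is_scheme_def
proof (intro ballI conjI)
  fix i :: nat assume i: "i \<in> {1..3}"
  show "prob_space (mk g i)"
  proof
    have "emeasure (mk g i) UNIV = (\<integral>\<^sup>+s. ennreal (g i s) * indicator {0..<1} s \<partial>lborel)"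
      unfolding mk_def by (subst emeasure_density) auto
    then show "emeasure (mk g i) (space (mk g i)) = 1" using int1[OF i] by (simp add: mk_def)
  qed
  show "sets (mk g i) = sets borel" by (simp add: mk_def)
qed

abbreviation U :: "real measure" where "U \<equiv> density lborel (indicator {0..<1})"

lemma nu_eq: "nu (mk g) = U"
proof (rule measure_eqI)
  show "sets (nu (mk g)) = sets U" by simp
  fix A assume "A \<in> sets (nu (mk g))"
  then have A[measurable]: "A \<in> sets borel" by simp
  have "emeasure (nu (mk g)) A = (\<Sum>i\<in>{1..3}. ennreal (1/3) * emeasure (mk g i) A)"
    by (rule nu_emeasure[OF scheme A])
  also have "\<dots> = (\<Sum>i\<in>{1..3}. ennreal (1/3) * (\<integral>\<^sup>+s. ennreal (g i s) * indicator {0..<1} s * indicator A s \<partial>lborel))"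
    unfolding mk_def by (subst emeasure_density) auto
  also have "\<dots> = (\<integral>\<^sup>+s. (\<Sum>i\<in>{1..3}. ennreal (1/3) * (ennreal (g i s) * indicator {0..<1} s * indicator A s)) \<partial>lborel)"
    by (subst nn_integral_sum) (auto simp: nn_integral_cmult)
  also have "\<dots> = (\<integral>\<^sup>+s. indicator {0..<1} s * indicator A s \<partial>lborel)"
  proof (rule nn_integral_cong)
    fix s :: real
    show "(\<Sum>i\<in>{1..3}. ennreal (1/3) * (ennreal (g i s) * indicator {0..<1} s * indicator A s)) = indicator {0..<1} s * indicator A s"
    proof (cases "s \<in> {0..<1}")
      case True
      have "(\<Sum>i\<in>{1..3}. ennreal (1/3) * ennreal (g i s)) = (\<Sum>i\<in>{1..3}. ennreal (g i s / 3))"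
        using nonneg by (intro sum.cong) (auto simp: ennreal_mult[symmetric])
      also have "\<dots> = ennreal (\<Sum>i\<in>{1..3}. g i s / 3)"
        using nonneg by (intro sum_ennreal) auto
      also have "\<dots> = 1" using sum3[OF True] by (simp add: sum_divide_distrib[symmetric])
      finally have e: "(\<Sum>i\<in>{1..3}. ennreal (1/3) * ennreal (g i s)) = 1" .
      have "(\<Sum>i\<in>{1..3}. ennreal (1/3) * (ennreal (g i s) * indicator {0..<1} s * indicator A s))
          = (\<Sum>i\<in>{1..3}. ennreal (1/3) * ennreal (g i s)) * indicator A s"
        using True by (simp add: sum_distrib_right mult.assoc)
      then show ?thesis using e True by simp
    qed simp
  qed
  also have "\<dots> = emeasure U A" by (subst emeasure_density) (auto simp: mult.commute)
  finally show "emeasure (nu (mk g)) A = emeasure U A" .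
qed

lemma RN_g: assumes i: "i \<in> {1..3}"
  shows "AE s in nu (mk g). ennreal (g i s) = RN_deriv (nu (mk g)) (mk g i) s"
proof (rule sigma_finite_measure.RN_deriv_unique[OF nu_sfin[OF scheme]])
  show "(\<lambda>s. ennreal (g i s)) \<in> borel_measurable (nu (mk g))"
    by (subst measurable_cong_sets[OF sets_signal_dist refl]) simp
  have "density (nu (mk g)) (\<lambda>s. ennreal (g i s)) = density U (\<lambda>s. ennreal (g i s))"
    by (simp add: nu_eq)
  also have "\<dots> = density lborel (\<lambda>s. indicator {0..<1} s * ennreal (g i s))"
    by (rule density_density_eq) auto
  also have "\<dots> = mk g i" unfolding mk_def by (simp add: mult.commute)
  finally show "density (nu (mk g)) (\<lambda>s. ennreal (g i s)) = mk g i" .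
qed

lemma AE_adopt: "AE s in nu (mk g). adopts 3 u (posterior 3 mu3 (mk g) s) \<longleftrightarrow> (\<Sum>i\<in>{1..3}. g i s * u i) \<ge> 0"
proof -
  have "AE s in nu (mk g). \<forall>i\<in>{1..3}. ennreal (g i s) = RN_deriv (nu (mk g)) (mk g i) s"
    using RN_g by (subst AE_finite_all) auto
  then show ?thesis
    using AE_post[OF scheme]
  proof eventually_elim
    case (elim s)
    have pf: "posterior 3 mu3 (mk g) s i = g i s / 3" if i: "i \<in> {1..3}" for i
    proof -
      have "qp (mk g) i s = 1/3 * enn2real (ennreal (g i s))"
        unfolding qp_def using elim i by simp
      then show ?thesis using elim i nonneg by simp
    qed
    have "(\<Sum>i\<in>{1..3}. posterior 3 mu3 (mk g) s i * u i) = (\<Sum>i\<in>{1..3}. g i s * u i / 3)"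
      by (rule sum.cong[OF refl]) (simp add: pf)
    then have "(\<Sum>i\<in>{1..3}. posterior 3 mu3 (mk g) s i * u i) = (\<Sum>i\<in>{1..3}. g i s * u i) / 3"
      by (simp add: sum_divide_distrib)
    then show ?case unfolding adopts_def by (auto simp: divide_nonneg_pos)
  qed
qed

lemma su_eq: "sender_util 3 mu3 (mk g) u = measure lborel ({0..<1} \<inter> {s. (\<Sum>i\<in>{1..3}. g i s * u i) \<ge> 0})"
proof -
  have S[measurable]: "{s. (\<Sum>i\<in>{1..3}. g i s * u i) \<ge> 0} \<in> sets borel" by measurable
  have "sender_util 3 mu3 (mk g) u = measure (nu (mk g)) {s. (\<Sum>i\<in>{1..3}. g i s * u i) \<ge> 0}"
    unfolding sender_util_def
    by (rule measure_eq_AE[OF _ adopt_set_measurable]) (use AE_adopt S in auto)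
  also have "\<dots> = measure U {s. (\<Sum>i\<in>{1..3}. g i s * u i) \<ge> 0}" by (simp add: nu_eq)
  also have "\<dots> = measure lborel ({0..<1} \<inter> {s. (\<Sum>i\<in>{1..3}. g i s * u i) \<ge> 0})"
  proof -
    have "emeasure U {s. (\<Sum>i\<in>{1..3}. g i s * u i) \<ge> 0} = emeasure lborel ({0..<1} \<inter> {s. (\<Sum>i\<in>{1..3}. g i s * u i) \<ge> 0})"
      by (subst emeasure_density) (auto intro!: nn_integral_cong simp: split: split_indicator simp flip: nn_integral_indicator)
    then show ?thesis unfolding measure_def by simp
  qed
  finally show ?thesis .
qed

end

lemma sum3: "sum f {1..3::nat} = f 1 + f 2 + f 3"
  unfolding three_set by (simp add: add.assoc)

lemma step_int:
  assumes e: "0 \<le> e" "e \<le> 1" and ab: "0 \<le> a" "0 \<le> b"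
  shows "(\<integral>\<^sup>+s. ennreal (if s < e then a else b) * indicator {0..<1} s \<partial>lborel) = ennreal (a * e + b * (1 - e))"
proof -
  have "(\<integral>\<^sup>+s. ennreal (if s < e then a else b) * indicator {0..<1} s \<partial>lborel)
      = (\<integral>\<^sup>+s. ennreal a * indicator {0..<e} s + ennreal b * indicator {e..<1} s \<partial>lborel)"
    using e by (intro nn_integral_cong) (auto split: split_indicator)
  also have "\<dots> = ennreal a * ennreal e + ennreal b * ennreal (1 - e)"
    using e by (subst nn_integral_add) (auto simp: nn_integral_cmult)
  also have "\<dots> = ennreal (a * e + b * (1 - e))"
    using e ab by (simp add: ennreal_mult ennreal_plus)
  finally show ?thesis .
qed

lemma measure_ge_sub:
  assumes "{0..<e} \<subseteq> S" "S \<subseteq> {0..<1::real}" "S \<in> sets borel" "0 \<le> e"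
  shows "measure lborel S \<ge> e"
proof -
  have "emeasure lborel {0..<e} \<le> emeasure lborel S" using assms by (intro emeasure_mono) auto
  moreover have "emeasure lborel S \<le> emeasure lborel {0..<1::real}" using assms by (intro emeasure_mono) auto
  ultimately have 1: "ennreal e \<le> emeasure lborel S" and 2: "emeasure lborel S \<le> 1" using assms by auto
  have "emeasure lborel S \<noteq> top" using 2 by (metis ennreal_one_neq_top neq_top_trans)
  then have "emeasure lborel S = ennreal (measure lborel S)" by (rule emeasure_eq_ennreal_measure)
  with 1 have "ennreal e \<le> ennreal (measure lborel S)" by simp
  then show ?thesis by (subst (asm) ennreal_le_iff) auto
qed


definition gL :: "real \<Rightarrow> nat \<Rightarrow> nat \<Rightarrow> real \<Rightarrow> real" where
  "gL \<epsilon> j i s = (if i \<in> {1..3} then (if s < 1 - \<epsilon> then (if i = j then (1 - 3*\<epsilon>)/(1 - \<epsilon>) else 1/(1 - \<epsilon>))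
                     else (if i = j then 3 else 0)) else 0)"

lemma gL_gsch: assumes e: "0 < \<epsilon>" "\<epsilon> < 1/3" and j: "j \<in> {1..3}"
  shows "gsch (gL \<epsilon> j)"
proof
  fix i
  show "gL \<epsilon> j i \<in> borel_measurable borel" unfolding gL_def by measurable
  fix s show "0 \<le> gL \<epsilon> j i s" using e unfolding gL_def by auto
next
  fix i :: nat assume i: "i \<in> {1..3}"
  show "(\<integral>\<^sup>+s. ennreal (gL \<epsilon> j i s) * indicator {0..<1} s \<partial>lborel) = 1"
  proof (cases "i = j")
    case True
    have "(\<integral>\<^sup>+s. ennreal (gL \<epsilon> j i s) * indicator {0..<1} s \<partial>lborel)
        = (\<integral>\<^sup>+s. ennreal (if s < 1 - \<epsilon> then (1 - 3*\<epsilon>)/(1 - \<epsilon>) else 3) * indicator {0..<1} s \<partial>lborel)"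
      using True i unfolding gL_def by simp
    also have "\<dots> = ennreal ((1 - 3*\<epsilon>)/(1 - \<epsilon>) * (1 - \<epsilon>) + 3 * (1 - (1 - \<epsilon>)))"
      using e by (intro step_int) auto
    also have "\<dots> = 1" using e by simp
    finally show ?thesis .
  next
    case False
    have "(\<integral>\<^sup>+s. ennreal (gL \<epsilon> j i s) * indicator {0..<1} s \<partial>lborel)
        = (\<integral>\<^sup>+s. ennreal (if s < 1 - \<epsilon> then 1/(1 - \<epsilon>) else 0) * indicator {0..<1} s \<partial>lborel)"
      using False i unfolding gL_def by simp
    also have "\<dots> = ennreal (1/(1 - \<epsilon>) * (1 - \<epsilon>) + 0 * (1 - (1 - \<epsilon>)))"
      using e by (intro step_int) auto
    also have "\<dots> = 1" using e by simp
    finally show ?thesis .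
  qed
next
  fix s :: real
  have "(\<Sum>i\<in>{1..3}. gL \<epsilon> j i s) = gL \<epsilon> j 1 s + gL \<epsilon> j 2 s + gL \<epsilon> j 3 s"
    unfolding sum3 ..
  also have "\<dots> = 3"
  proof -
    have ne: "1 - \<epsilon> \<noteq> 0" using e by simp
    have h: "(1 - 3*\<epsilon>)/(1 - \<epsilon>) = 3 - 2 * (1/(1 - \<epsilon>))" using ne by (simp add: field_simps)
    show ?thesis using j unfolding gL_def h by auto
  qed
  finally show "(\<Sum>i\<in>{1..3}. gL \<epsilon> j i s) = 3" .
qed


definition uP :: "real \<Rightarrow> nat \<Rightarrow> real" where
  "uP \<epsilon> = (\<lambda>i. if i = 1 then 1 - \<epsilon> else if i = 2 then -1 - \<epsilon> else -\<epsilon>)"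
definition uM :: "real \<Rightarrow> nat \<Rightarrow> real" where
  "uM \<epsilon> = (\<lambda>i. if i = 1 then -1 - \<epsilon> else if i = 2 then 1 - \<epsilon> else -\<epsilon>)"

lemma su_gL:
  assumes e: "0 < \<epsilon>" "\<epsilon> < 1/3" and j: "j \<in> {1..3}"
    and pos: "\<And>s. s < 1 - \<epsilon> \<Longrightarrow> (\<Sum>i\<in>{1..3}. gL \<epsilon> j i s * u i) \<ge> 0"
  shows "sender_util 3 mu3 (mk (gL \<epsilon> j)) u \<ge> 1 - \<epsilon>"
proof -
  interpret gsch "gL \<epsilon> j" by (rule gL_gsch[OF e j])
  have "measure lborel ({0..<1} \<inter> {s. (\<Sum>i\<in>{1..3}. gL \<epsilon> j i s * u i) \<ge> 0}) \<ge> 1 - \<epsilon>"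
    by (rule measure_ge_sub) (use pos e in auto)
  then show ?thesis using su_eq by simp
qed

lemma su_P: assumes e: "0 < \<epsilon>" "\<epsilon> < 1/3"
  shows "sender_util 3 mu3 (mk (gL \<epsilon> 2)) (uP \<epsilon>) \<ge> 1 - \<epsilon>"
proof (rule su_gL[OF e])
  fix s :: real assume s: "s < 1 - \<epsilon>"
  have ne: "1 - \<epsilon> \<noteq> 0" using e by simp
  have "(\<Sum>i\<in>{1..3}. gL \<epsilon> 2 i s * uP \<epsilon> i) = 1/(1-\<epsilon>) * (1-\<epsilon>) + (1-3*\<epsilon>)/(1-\<epsilon>) * (-1-\<epsilon>) + 1/(1-\<epsilon>) * (-\<epsilon>)"
    unfolding sum3 using s by (simp add: gL_def uP_def)
  also have "\<dots> = (1/(1-\<epsilon>)) * (3 * \<epsilon>^2)"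
  proof -
    define x where "x = 1/(1-\<epsilon>)"
    have hx: "x * (1-\<epsilon>) = 1" using ne by (simp add: x_def)
    have "1/(1-\<epsilon>) * (1-\<epsilon>) + (1-3*\<epsilon>)/(1-\<epsilon>) * (-1-\<epsilon>) + 1/(1-\<epsilon>) * (-\<epsilon>) = x * (1-\<epsilon>) + (1-3*\<epsilon>) * x * (-1-\<epsilon>) + x * (-\<epsilon>)"
      by (simp add: x_def)
    also have "\<dots> = x * (3 * \<epsilon>^2)" by (simp add: algebra_simps power2_eq_square)
    finally show ?thesis by (simp add: x_def)
  qed
  also have "\<dots> \<ge> 0" using e by simp
  finally show "(\<Sum>i\<in>{1..3}. gL \<epsilon> 2 i s * uP \<epsilon> i) \<ge> 0" .
qed simp

lemma su_M: assumes e: "0 < \<epsilon>" "\<epsilon> < 1/3"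
  shows "sender_util 3 mu3 (mk (gL \<epsilon> 1)) (uM \<epsilon>) \<ge> 1 - \<epsilon>"
proof (rule su_gL[OF e])
  fix s :: real assume s: "s < 1 - \<epsilon>"
  have ne: "1 - \<epsilon> \<noteq> 0" using e by simp
  have "(\<Sum>i\<in>{1..3}. gL \<epsilon> 1 i s * uM \<epsilon> i) = (1-3*\<epsilon>)/(1-\<epsilon>) * (-1-\<epsilon>) + 1/(1-\<epsilon>) * (1-\<epsilon>) + 1/(1-\<epsilon>) * (-\<epsilon>)"
    unfolding sum3 using s by (simp add: gL_def uM_def)
  also have "\<dots> = (1/(1-\<epsilon>)) * (3 * \<epsilon>^2)"
  proof -
    define x where "x = 1/(1-\<epsilon>)"
    have hx: "x * (1-\<epsilon>) = 1" using ne by (simp add: x_def)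
    have "(1-3*\<epsilon>)/(1-\<epsilon>) * (-1-\<epsilon>) + 1/(1-\<epsilon>) * (1-\<epsilon>) + 1/(1-\<epsilon>) * (-\<epsilon>) = x * (1-\<epsilon>) + (1-3*\<epsilon>) * x * (-1-\<epsilon>) + x * (-\<epsilon>)"
      by (simp add: x_def)
    also have "\<dots> = x * (3 * \<epsilon>^2)" by (simp add: algebra_simps power2_eq_square)
    finally show ?thesis by (simp add: x_def)
  qed
  also have "\<dots> \<ge> 0" using e by simp
  finally show "(\<Sum>i\<in>{1..3}. gL \<epsilon> 1 i s * uM \<epsilon> i) \<ge> 0" .
qed simp

lemma some_scheme: "is_scheme 3 (mk (gL (1/4) 1))"
proof -
  interpret gsch "gL (1/4) 1" by (rule gL_gsch) auto
  show ?thesis by (rule scheme)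
qed

lemma opt_le_1: "opt_util 3 mu3 u \<le> 1"
  unfolding opt_util_def
  by (rule cSUP_least) (use some_scheme su_le_1 in auto)

lemma opt_ge: "is_scheme 3 \<pi> \<Longrightarrow> sender_util 3 mu3 \<pi> u \<le> opt_util 3 mu3 u"
  unfolding opt_util_def
  by (rule cSUP_upper) (auto intro!: bdd_aboveI[where M=1] su_le_1)

lemma regret_ge_term: "opt_util 3 mu3 u - sender_util 3 mu3 \<pi> u \<le> regret_AR 3 mu3 \<pi>"
  unfolding regret_AR_def
proof (rule cSUP_upper)
  show "bdd_above (range (\<lambda>u. opt_util 3 mu3 u - sender_util 3 mu3 \<pi> u))"
  proof (rule bdd_aboveI[where M=1])
    fix x assume "x \<in> range (\<lambda>u. opt_util 3 mu3 u - sender_util 3 mu3 \<pi> u)"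
    then obtain u where "x = opt_util 3 mu3 u - sender_util 3 mu3 \<pi> u" by auto
    then show "x \<le> 1" using opt_le_1[of u] su_nonneg[of \<pi> u] by linarith
  qed
qed simp

lemma regret_lower: assumes sch: "is_scheme 3 \<pi>" shows "regret_AR 3 mu3 \<pi> \<ge> 1/2"
proof (rule ccontr)
  let ?R = "regret_AR 3 mu3 \<pi>"
  assume "\<not> ?R \<ge> 1/2"
  then have R: "?R < 1/2" by simp
  define \<epsilon> where "\<epsilon> = min (1/4) ((1/2 - ?R)/2)"
  have e: "0 < \<epsilon>" "\<epsilon> < 1/3" using R by (auto simp: \<epsilon>_def)
  have dis: "sender_util 3 mu3 \<pi> (uP \<epsilon>) + sender_util 3 mu3 \<pi> (uM \<epsilon>) \<le> 1"
  proof (rule su_disjoint[OF sch])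
    fix p :: "nat \<Rightarrow> real"
    assume "(\<Sum>i\<in>{1..3}. p i) = 1" "(\<Sum>i\<in>{1..3}. p i * uP \<epsilon> i) \<ge> 0" "(\<Sum>i\<in>{1..3}. p i * uM \<epsilon> i) \<ge> 0"
    then have "p 1 + p 2 + p 3 = 1" "p 1 * (1 - \<epsilon>) + p 2 * (-1 - \<epsilon>) + p 3 * (-\<epsilon>) \<ge> 0"
      "p 1 * (-1 - \<epsilon>) + p 2 * (1 - \<epsilon>) + p 3 * (-\<epsilon>) \<ge> 0"
      unfolding sum3 by (simp_all add: uP_def uM_def)
    moreover have "\<epsilon> * p 1 + \<epsilon> * p 2 + \<epsilon> * p 3 = \<epsilon>"
      using \<open>p 1 + p 2 + p 3 = 1\<close> by (metis distrib_left mult.right_neutral)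
    ultimately show False using e by (simp add: algebra_simps)
  qed
  have oP: "opt_util 3 mu3 (uP \<epsilon>) \<ge> 1 - \<epsilon>"
    using su_P[OF e] opt_ge[of "mk (gL \<epsilon> 2)" "uP \<epsilon>"] gsch.scheme[OF gL_gsch[OF e, of 2]] by simp
  have oM: "opt_util 3 mu3 (uM \<epsilon>) \<ge> 1 - \<epsilon>"
    using su_M[OF e] opt_ge[of "mk (gL \<epsilon> 1)" "uM \<epsilon>"] gsch.scheme[OF gL_gsch[OF e, of 1]] by simp
  have "opt_util 3 mu3 (uP \<epsilon>) - sender_util 3 mu3 \<pi> (uP \<epsilon>) \<le> ?R"
       "opt_util 3 mu3 (uM \<epsilon>) - sender_util 3 mu3 \<pi> (uM \<epsilon>) \<le> ?R"
    by (rule regret_ge_term)+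
  then have "1/2 - \<epsilon> \<le> ?R" using oP oM dis by linarith
  moreover have "\<epsilon> \<le> (1/2 - ?R)/2" unfolding \<epsilon>_def by (rule min.cobounded2)
  ultimately show False using R by (simp add: field_simps)
qed

definition ell :: "real \<Rightarrow> real \<Rightarrow> real" where
  "ell a b = (if 0 \<le> a \<and> 0 \<le> b then 1/6 else if 0 \<le> a then min (1/6) (a/(6*(-b)))
              else if 0 < b then max 0 (1/6 - (-a)/(6*b)) else 0)"

definition L3 :: "real \<Rightarrow> real \<Rightarrow> real \<Rightarrow> real" where
  "L3 x y z = ell x y + ell y x + ell x z + ell z x + ell y z + ell z y"

definition certp :: "real \<Rightarrow> real \<Rightarrow> real \<Rightarrow> real \<Rightarrow> real \<Rightarrow> real \<Rightarrow> bool" where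
  "certp x y z c1 c2 c3 \<longleftrightarrow> 0 \<le> c1 \<and> 0 \<le> c2 \<and> 0 \<le> c3 \<and>
     (\<forall>p1 p2 p3. 0 \<le> p1 \<longrightarrow> 0 \<le> p2 \<longrightarrow> 0 \<le> p3 \<longrightarrow> p1 + p2 + p3 = 1 \<longrightarrow>
        p1 * x + p2 * y + p3 * z \<ge> 0 \<longrightarrow> p1 * c1 + p2 * c2 + p3 * c3 \<ge> 1)"

definition good :: "real \<Rightarrow> real \<Rightarrow> real \<Rightarrow> bool" where
  "good x y z \<longleftrightarrow> (\<exists>c1 c2 c3. certp x y z c1 c2 c3 \<and> c1 + c2 + c3 \<le> 3 * L3 x y z + 3/2)"

lemma ell_nonneg: "ell a b \<ge> 0"
  unfolding ell_def by (auto simp: divide_le_0_iff mult_less_0_iff)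

lemma L3_swap12: "L3 y x z = L3 x y z" unfolding L3_def by simp
lemma L3_swap23: "L3 x z y = L3 x y z" unfolding L3_def by simp

lemma good_swap12: assumes "good x y z" shows "good y x z"
proof -
  obtain c1 c2 c3 where c: "certp x y z c1 c2 c3" "c1 + c2 + c3 \<le> 3 * L3 x y z + 3/2"
    using assms unfolding good_def by blast
  have "certp y x z c2 c1 c3"
    unfolding certp_def
  proof (intro conjI allI impI)
    show "0 \<le> c2" "0 \<le> c1" "0 \<le> c3" using c(1) unfolding certp_def by auto
    fix p1 p2 p3 :: real
    assume p: "0 \<le> p1" "0 \<le> p2" "0 \<le> p3" "p1 + p2 + p3 = 1" "p1 * y + p2 * x + p3 * z \<ge> 0"
    have "p2 * c1 + p1 * c2 + p3 * c3 \<ge> 1"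
      using c(1) p unfolding certp_def by (metis add.commute)
    then show "p1 * c2 + p2 * c1 + p3 * c3 \<ge> 1" by (simp add: ac_simps)
  qed
  then show ?thesis unfolding good_def using c(2) L3_swap12[of y x z] by (intro exI[of _ c2] exI[of _ c1] exI[of _ c3]) auto
qed

lemma good_swap23: assumes "good x y z" shows "good x z y"
proof -
  obtain c1 c2 c3 where c: "certp x y z c1 c2 c3" "c1 + c2 + c3 \<le> 3 * L3 x y z + 3/2"
    using assms unfolding good_def by blast
  have "certp x z y c1 c3 c2"
    unfolding certp_def
  proof (intro conjI allI impI)
    show "0 \<le> c1" "0 \<le> c3" "0 \<le> c2" using c(1) unfolding certp_def by auto
    fix p1 p2 p3 :: real
    assume p: "0 \<le> p1" "0 \<le> p2" "0 \<le> p3" "p1 + p2 + p3 = 1" "p1 * x + p2 * z + p3 * y \<ge> 0"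
    have h: "p1 + p3 + p2 = 1" "p1 * x + p3 * y + p2 * z \<ge> 0" using p by (simp_all add: ac_simps)
    have "p1 * c1 + p3 * c2 + p2 * c3 \<ge> 1"
      using c(1) p(1-3) h unfolding certp_def by blast
    then show "p1 * c1 + p2 * c3 + p3 * c2 \<ge> 1" by (simp add: ac_simps)
  qed
  then show ?thesis unfolding good_def using c(2) L3_swap23[of x z y] by (intro exI[of _ c1] exI[of _ c3] exI[of _ c2]) auto
qed

lemma ell_scale: assumes k: "0 < k" shows "ell (a/k) (b/k) = ell a b"
proof -
  have e1: "(a/k)/(6*(-(b/k))) = a/(6*(-b))" using k by (cases "b = 0") (simp_all add: field_simps)
  have e2: "(-(a/k))/(6*(b/k)) = (-a)/(6*b)" using k by (cases "b = 0") (simp_all add: field_simps)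
  have s1: "(0 \<le> a/k) = (0 \<le> a)" "(0 \<le> b/k) = (0 \<le> b)" "(0 < b/k) = (0 < b)"
    using k by (simp_all add: zero_le_divide_iff zero_less_divide_iff)
  show ?thesis unfolding ell_def s1 e1 e2 ..
qed

lemma L3_scale: "0 < k \<Longrightarrow> L3 (x/k) (y/k) (z/k) = L3 x y z"
  unfolding L3_def by (simp add: ell_scale)

lemma good_scale: assumes k: "0 < k" and g: "good (x/k) (y/k) (z/k)" shows "good x y z"
proof -
  obtain c1 c2 c3 where c: "certp (x/k) (y/k) (z/k) c1 c2 c3" "c1 + c2 + c3 \<le> 3 * L3 (x/k) (y/k) (z/k) + 3/2"
    using g unfolding good_def by blast
  have "certp x y z c1 c2 c3"
    unfolding certp_def
  proof (intro conjI allI impI)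
    show "0 \<le> c1" "0 \<le> c2" "0 \<le> c3" using c(1) unfolding certp_def by auto
    fix p1 p2 p3 :: real
    assume p: "0 \<le> p1" "0 \<le> p2" "0 \<le> p3" "p1 + p2 + p3 = 1" "p1 * x + p2 * y + p3 * z \<ge> 0"
    have "p1 * (x/k) + p2 * (y/k) + p3 * (z/k) = (p1 * x + p2 * y + p3 * z) / k"
      by (simp add: add_divide_distrib)
    also have "\<dots> \<ge> 0" using p k by simp
    finally show "p1 * c1 + p2 * c2 + p3 * c3 \<ge> 1" using c(1) p unfolding certp_def by blast
  qed
  then show ?thesis unfolding good_def using c(2) L3_scale[OF k] by auto
qed


lemma good_all_nonneg: assumes "0 \<le> x" "0 \<le> y" "0 \<le> z" shows "good x y z"
proof -
  have "L3 x y z = 1" using assms unfolding L3_def ell_def by simp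
  moreover have "certp x y z 1 1 1" unfolding certp_def by auto
  ultimately show ?thesis unfolding good_def by (intro exI[of _ 1]) auto
qed

lemma good_all_neg: assumes "x < 0" "y \<le> x" "z \<le> x" shows "good x y z"
proof -
  have "certp x y z 0 0 0" unfolding certp_def
  proof (intro conjI allI impI)
    fix p1 p2 p3 :: real
    assume p: "0 \<le> p1" "0 \<le> p2" "0 \<le> p3" "p1 + p2 + p3 = 1" "p1 * x + p2 * y + p3 * z \<ge> 0"
    have "p2 * y \<le> p2 * x" "p3 * z \<le> p3 * x" using p assms by (simp_all add: mult_left_mono)
    then have "p1 * x + p2 * y + p3 * z \<le> (p1 + p2 + p3) * x" by (simp add: algebra_simps)
    then have "p1 * x + p2 * y + p3 * z < 0" using p(4) assms(1) by simp
    then show "p1 * 0 + p2 * 0 + p3 * 0 \<ge> 1" using p(5) by simp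
  qed simp_all
  moreover have "0 \<le> L3 x y z" unfolding L3_def using ell_nonneg by (simp add: add_nonneg_nonneg)
  ultimately show ?thesis unfolding good_def by (intro exI[of _ 0]) auto
qed

definition Mf :: "real \<Rightarrow> real" where
  "Mf t = min (1/6) (t/6) + (if 0 < t then max 0 (1/6 - 1/(6*t)) else 0)"

lemma Mf_small: "0 \<le> t \<Longrightarrow> t \<le> 1 \<Longrightarrow> Mf t = t/6"
  unfolding Mf_def by (auto simp: field_simps)

lemma Mf_big: "1 \<le> t \<Longrightarrow> Mf t \<ge> 1/6"
  unfolding Mf_def by (auto simp: field_simps)

lemma Mf_nonneg: "0 \<le> t \<Longrightarrow> Mf t \<ge> 0"
  unfolding Mf_def by auto

lemma ell_m1: "0 \<le> t \<Longrightarrow> ell t (-1) + ell (-1) t = Mf t"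
  unfolding ell_def Mf_def by auto

lemma good_case3: assumes xy: "y \<le> x" and y: "0 \<le> y" shows "good x y (-1)"
proof -
  have L: "L3 x y (-1) = 1/3 + Mf x + Mf y"
    using ell_m1[of x] ell_m1[of y] xy y unfolding L3_def by (simp add: ell_def)
  show ?thesis
  proof (cases "x + y \<ge> 1")
    case True
    have "Mf x + Mf y \<ge> 1/6"
    proof (cases "x \<ge> 1")
      case True then show ?thesis using Mf_big[of x] Mf_nonneg[of y] y by simp
    next
      case False then show ?thesis using Mf_small[of x] Mf_small[of y] xy y \<open>x + y \<ge> 1\<close> by simp
    qed
    then have "3 \<le> 3 * L3 x y (-1) + 3/2" using L by simp
    moreover have "certp x y (-1) 1 1 1" unfolding certp_def by auto
    ultimately show ?thesis unfolding good_def by (intro exI[of _ 1]) auto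
  next
    case False
    then have "x < 1" "y < 1" using y xy by auto
    then have "L3 x y (-1) = 1/3 + x/6 + y/6" using L Mf_small[of x] Mf_small[of y] xy y by simp
    then have v: "(x + 1) + (y + 1) + 0 \<le> 3 * L3 x y (-1) + 3/2" using False by simp
    have "certp x y (-1) (x + 1) (y + 1) 0" unfolding certp_def
    proof (intro conjI allI impI)
      show "0 \<le> x + 1" "0 \<le> y + 1" using xy y by auto
      fix p1 p2 p3 :: real
      assume p: "0 \<le> p1" "0 \<le> p2" "0 \<le> p3" "p1 + p2 + p3 = 1" "p1 * x + p2 * y + p3 * (-1) \<ge> 0"
      then show "p1 * (x + 1) + p2 * (y + 1) + p3 * 0 \<ge> 1" by (simp add: algebra_simps)
    qed simp
    then show ?thesis using v unfolding good_def by blast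
  qed
qed


lemma nl1: fixes b x :: real assumes b: "0 < b" "b < x" "x \<le> 1"
  shows "x - b + 2 \<le> 5/2 - b/(2*x) + x/2"
proof -
  have x0: "0 < x" using b by linarith
  have key: "x*x - 2*b*x + b - x \<le> 0"
  proof (cases "2*x \<ge> 1")
    case True
    have "x*(x-1) \<le> 0" using b x0 by (simp add: mult_nonneg_nonpos)
    moreover have "b*(2*x-1) \<ge> 0" using b True by simp
    ultimately show ?thesis by (simp add: algebra_simps)
  next
    case False
    have h1: "b*(1-2*x) \<le> x*(1-2*x)" using b False by (intro mult_right_mono) auto
    have h2: "x*x \<ge> 0" by simp
    have "x*x - 2*b*x + b - x = -(x*x) + (b*(1-2*x) - x*(1-2*x))" by (simp add: algebra_simps)
    then show ?thesis using h1 h2 by linarith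
  qed
  have "(x - b + 2) - (5/2 - b/(2*x) + x/2) = (x*x - 2*b*x + b - x) / (2*x)"
    using x0 by (simp add: field_simps)
  also have "\<dots> \<le> 0" using key x0 by (simp add: divide_nonpos_pos)
  finally show ?thesis by linarith
qed

lemma nl2: fixes b x :: real assumes b: "0 < b" "1 < x" "x < 1 + b"
  shows "x - b + 2 \<le> 7/2 - (1 + b)/(2*x)"
proof -
  have x0: "0 < x" using b by linarith
  have key: "(2*x - 1) * (x - 1 - b) \<le> 0" using b by (intro mult_nonneg_nonpos) auto
  have "(x - b + 2) - (7/2 - (1 + b)/(2*x)) = ((2*x - 1) * (x - 1 - b)) / (2*x)"
    using x0 by (simp add: field_simps)
  also have "\<dots> \<le> 0" using key x0 by (simp add: divide_nonpos_pos)
  finally show ?thesis by linarith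
qed

lemma good_case4: assumes x: "0 \<le> x" and y: "y < 0" "-1 \<le> y" shows "good x y (-1)"
proof -
  define b where "b = -y"
  have b: "0 < b" "b \<le> 1" "y = -b" using y by (auto simp: b_def)
  have e1: "ell x y = min (1/6) (x/(6*b))" using x b unfolding ell_def by simp
  have e2: "ell y x = (if 0 < x then max 0 (1/6 - b/(6*x)) else 0)" using x b unfolding ell_def by simp
  have e3: "ell y (-1) = 0" "ell (-1) y = 0" using b unfolding ell_def by auto
  have e4: "ell x (-1) + ell (-1) x = Mf x" by (rule ell_m1[OF x])
  have L: "L3 x y (-1) = min (1/6) (x/(6*b)) + (if 0 < x then max 0 (1/6 - b/(6*x)) else 0) + Mf x"
    unfolding L3_def using e1 e2 e3 e4 by simp
  show ?thesis
  proof (cases "x \<ge> 1 + b")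
    case True
    have x0: "0 < x" using True b by linarith
    have xb1: "1 \<le> x" "b \<le> x" using True b by linarith+
    have "1/6 \<le> x/(6*b)" using xb1 b by (simp add: le_divide_eq)
    then have m1: "min (1/6) (x/(6*b)) = 1/6" by simp
    have "b/(6*x) \<le> 1/6" using xb1 x0 by (simp add: divide_le_eq)
    then have m2: "(if 0 < x then max 0 (1/6 - b/(6*x)) else 0) = 1/6 - b/(6*x)" using x0 by simp
    have "1/(6*x) \<le> 1/6" using xb1 x0 by (simp add: divide_le_eq)
    moreover have "1/6 \<le> x/6" using xb1 by simp
    ultimately have m3: "Mf x = 1/3 - 1/(6*x)" unfolding Mf_def using x0 by simp
    have "(1 + b)/(6*x) \<le> 1/6" using True x0 by (simp add: divide_le_eq)
    moreover have "(1 + b)/(6*x) = 1/(6*x) + b/(6*x)" by (simp add: add_divide_distrib)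
    ultimately have "L3 x y (-1) \<ge> 1/2" unfolding L m1 m2 m3 by linarith
    then have "3 \<le> 3 * L3 x y (-1) + 3/2" by simp
    moreover have "certp x y (-1) 1 1 1" unfolding certp_def by auto
    ultimately show ?thesis unfolding good_def by (intro exI[of _ 1]) auto
  next
    case False
    show ?thesis
    proof (cases "x \<le> b")
      case True
      have m1: "min (1/6) (x/(6*b)) = x/(6*b)" using True b by (simp add: field_simps)
      have m2: "(if 0 < x then max 0 (1/6 - b/(6*x)) else 0) = 0"
        using True b by (auto simp: field_simps)
      have m3: "Mf x = x/6" using True b x by (intro Mf_small) auto
      have L': "L3 x y (-1) = x/(6*b) + x/6" unfolding L m1 m2 m3 by simp
      have "(x + b)/b \<le> 3 * L3 x y (-1) + 3/2"
      proof -
        have "x * (1 - b) \<le> x" using x b by (intro mult_left_le) auto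
        then have "x * (1 - b) \<le> b" using True by linarith
        then have "(x + b)/b - (x/(2*b) + x/2 + 3/2) = (x - x*b - b) / (2*b)" using b by (simp add: field_simps)
        also have "\<dots> \<le> 0" using \<open>x * (1 - b) \<le> b\<close> b by (simp add: divide_nonpos_pos algebra_simps)
        finally show ?thesis unfolding L' by simp
      qed
      then have v: "(x + b)/b + 0 + 0 \<le> 3 * L3 x y (-1) + 3/2" by simp
      have "certp x y (-1) ((x + b)/b) 0 0" unfolding certp_def
      proof (intro conjI allI impI)
        show "0 \<le> (x + b)/b" using x b by simp
        fix p1 p2 p3 :: real
        assume p: "0 \<le> p1" "0 \<le> p2" "0 \<le> p3" "p1 + p2 + p3 = 1" "p1 * x + p2 * y + p3 * (-1) \<ge> 0"
        have h3: "p3 * b \<le> p3" using p b by (simp add: mult_left_le)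
        have h4: "b = b*p1 + b*p2 + b*p3" using p(4) by (metis distrib_left mult.right_neutral)
        have h5: "p1 * x + p2 * (-b) + p3 * (-1) \<ge> 0" using p(5) b(3) by simp
        have "p1 * (x + b) \<ge> b" using h3 h4 h5 by (simp add: algebra_simps)
        then have "p1 * ((x + b)/b) \<ge> 1" using b by (simp add: field_simps)
        then show "p1 * ((x + b)/b) + p2 * 0 + p3 * 0 \<ge> 1" by simp
      qed simp_all
      then show ?thesis using v unfolding good_def by blast
    next
      case xb: False
      have x0: "0 < x" using xb b by linarith
      have m1: "min (1/6) (x/(6*b)) = 1/6" using xb b by (simp add: field_simps)
      have m2: "(if 0 < x then max 0 (1/6 - b/(6*x)) else 0) = 1/6 - b/(6*x)" using xb b x0 by (simp add: field_simps)
      have v: "(x + 1) + (y + 1) + 0 \<le> 3 * L3 x y (-1) + 3/2"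
      proof (cases "x \<le> 1")
        case True
        have "Mf x = x/6" using True x by (intro Mf_small) auto
        then have "3 * L3 x y (-1) + 3/2 = 5/2 - b/(2*x) + x/2" unfolding L m1 m2 by (simp add: field_simps)
        then show ?thesis using nl1[of b x] b xb True by simp
      next
        case False
        have mf: "Mf x = 1/3 - 1/(6*x)" using False unfolding Mf_def by (simp add: field_simps)
        have "3 * L3 x y (-1) + 3/2 = 7/2 - (1 + b)/(2*x)" unfolding L m1 m2 mf using x0 by (simp add: field_simps)
        then show ?thesis using nl2[of b x] b \<open>\<not> x \<ge> 1 + b\<close> False by linarith
      qed
      have "certp x y (-1) (x + 1) (y + 1) 0" unfolding certp_def
      proof (intro conjI allI impI)
        show "0 \<le> x + 1" "0 \<le> y + 1" using x y by auto
        fix p1 p2 p3 :: real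
        assume p: "0 \<le> p1" "0 \<le> p2" "0 \<le> p3" "p1 + p2 + p3 = 1" "p1 * x + p2 * y + p3 * (-1) \<ge> 0"
        then show "p1 * (x + 1) + p2 * (y + 1) + p3 * 0 \<ge> 1" by (simp add: algebra_simps)
      qed simp
      then show ?thesis using v unfolding good_def by blast
    qed
  qed
qed


lemma good_sorted: fixes x y z :: real assumes xy: "y \<le> x" and yz: "z \<le> y" shows "good x y z"
proof (cases "0 \<le> z")
  case True then show ?thesis using xy yz by (intro good_all_nonneg) auto
next
  case zneg: False
  show ?thesis
  proof (cases "x < 0")
    case True then show ?thesis using xy yz by (intro good_all_neg) auto
  next
    case x0: False
    define k where "k = -z"
    have k: "0 < k" using zneg by (simp add: k_def)
    have zk: "z/k = -1" using k by (simp add: k_def)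
    have "good (x/k) (y/k) (-1)"
    proof (cases "0 \<le> y")
      case True
      then show ?thesis using xy k by (intro good_case3) (auto simp: divide_right_mono)
    next
      case False
      have "z/k \<le> y/k" using yz k by (simp add: divide_right_mono)
      then show ?thesis using False x0 k zk by (intro good_case4) (auto simp: divide_neg_pos)
    qed
    then show ?thesis using good_scale[OF k] zk by simp
  qed
qed

lemma good_all: fixes x y z :: real shows "good x y z"
proof -
  have "y \<le> x \<and> z \<le> y \<or> x \<le> y \<and> z \<le> x \<or> y \<le> x \<and> y \<le> z \<and> z \<le> x \<or> y \<le> z \<and> x \<le> z \<and> y \<le> x
        \<or> x \<le> z \<and> z \<le> y \<or> x \<le> y \<and> y \<le> z" by linarith
  then show ?thesis
  proof (elim disjE conjE)
    assume "y \<le> x" "z \<le> y" then show ?thesis by (rule good_sorted)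
  next
    assume "x \<le> y" "z \<le> x" then show ?thesis using good_sorted[of x y z] good_swap12[of y x z] by simp
  next
    assume "y \<le> x" "y \<le> z" "z \<le> x" then show ?thesis using good_sorted[of z x y] good_swap23[of x z y] by simp
  next
    assume "y \<le> z" "x \<le> z" "y \<le> x" then show ?thesis
      using good_sorted[of x z y] good_swap12[of z x y] good_swap23[of x z y] by simp
  next
    assume "x \<le> z" "z \<le> y" then show ?thesis
      using good_sorted[of z y x] good_swap23[of y z x] good_swap12[of y x z] by simp
  next
    assume "x \<le> y" "y \<le> z" then show ?thesis
      using good_sorted[of y z x] good_swap12[of z y x] good_swap23[of y z x] good_swap12[of y x z] by simp
  qed
qed

definition wA :: "real \<Rightarrow> real \<Rightarrow> real" where "wA o' s = 3 / (1 + 6 * (s - o'))"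
definition wB :: "real \<Rightarrow> real \<Rightarrow> real" where "wB o' s = 18 * (s - o') / (1 + 6 * (s - o'))"

lemma wA_int: "(\<integral>\<^sup>+s. ennreal (indicator {o'..<o'+1/6} s * wA o' s) \<partial>lborel) = ennreal (ln 2 / 2)"
proof -
  have "(\<integral>\<^sup>+s. ennreal (indicator {o'..<o'+1/6} s * wA o' s) \<partial>lborel)
      = (\<integral>\<^sup>+s. ennreal (wA o' s) * indicator {o'..o'+1/6} s \<partial>lborel)"
    by (intro nn_integral_cong_AE, rule AE_mp[OF AE_lborel_singleton[of "o'+1/6"]])
       (auto split: split_indicator)
  also have "\<dots> = ennreal (ln (1 + 6 * ((o'+1/6) - o')) / 2 - ln (1 + 6 * (o' - o')) / 2)"
  proof (rule nn_integral_FTC_Icc)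
    show "wA o' \<in> borel_measurable borel" unfolding wA_def by measurable
    fix x assume x: "x \<in> {o'..o'+1/6}"
    then have p: "0 < 1 + 6 * (x - o')" by auto
    show "((\<lambda>s. ln (1 + 6 * (s - o')) / 2) has_real_derivative wA o' x) (at x)"
      unfolding wA_def using p by (auto intro!: derivative_eq_intros simp: field_simps)
    show "0 \<le> wA o' x" unfolding wA_def using p by simp
  qed simp
  also have "\<dots> = ennreal (ln 2 / 2)" by simp
  finally show ?thesis .
qed

lemma wB_int: "(\<integral>\<^sup>+s. ennreal (indicator {o'..<o'+1/6} s * wB o' s) \<partial>lborel) = ennreal (1/2 - ln 2 / 2)"
proof -
  have "(\<integral>\<^sup>+s. ennreal (indicator {o'..<o'+1/6} s * wB o' s) \<partial>lborel)
      = (\<integral>\<^sup>+s. ennreal (wB o' s) * indicator {o'..o'+1/6} s \<partial>lborel)"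
    by (intro nn_integral_cong_AE, rule AE_mp[OF AE_lborel_singleton[of "o'+1/6"]])
       (auto split: split_indicator)
  also have "\<dots> = ennreal ((3 * ((o'+1/6) - o') - ln (1 + 6 * ((o'+1/6) - o')) / 2) - (3 * (o' - o') - ln (1 + 6 * (o' - o')) / 2))"
  proof (rule nn_integral_FTC_Icc)
    show "wB o' \<in> borel_measurable borel" unfolding wB_def by measurable
    fix x assume x: "x \<in> {o'..o'+1/6}"
    then have p: "0 < 1 + 6 * (x - o')" by auto
    show "((\<lambda>s. 3 * (s - o') - ln (1 + 6 * (s - o')) / 2) has_real_derivative wB o' x) (at x)"
      unfolding wB_def using p by (auto intro!: derivative_eq_intros simp: field_simps)
    show "0 \<le> wB o' x" unfolding wB_def using p x by simp
  qed simp
  also have "\<dots> = ennreal (1/2 - ln 2 / 2)" by simp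
  finally show ?thesis .
qed


definition tm :: "nat \<Rightarrow> nat \<Rightarrow> real \<Rightarrow> nat \<Rightarrow> real \<Rightarrow> real" where
  "tm a b o' i s = indicator {o'..<o'+1/6} s * (if i = a then wA o' s else if i = b then wB o' s else 0)"

definition gS :: "nat \<Rightarrow> real \<Rightarrow> real" where
  "gS i s = tm 1 2 0 i s + tm 2 1 (1/6) i s + tm 1 3 (2/6) i s + tm 3 1 (3/6) i s + tm 2 3 (4/6) i s + tm 3 2 (5/6) i s"

lemma wA_nonneg: "s \<in> {o'..<o'+1/6} \<Longrightarrow> wA o' s \<ge> 0" unfolding wA_def by auto
lemma wB_nonneg: "s \<in> {o'..<o'+1/6} \<Longrightarrow> wB o' s \<ge> 0" unfolding wB_def by auto
lemma wAB_sum: assumes "s \<in> {o'..<o'+1/6}" shows "wA o' s + wB o' s = 3"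
proof -
  have p: "1 + 6 * (s - o') \<noteq> 0" using assms by auto
  define d where "d = 1 + 6 * (s - o')"
  have d: "d \<noteq> 0" using p by (simp add: d_def)
  have "wA o' s + wB o' s = 3/d + (18 * (s - o'))/d" unfolding wA_def wB_def d_def by simp
  also have "\<dots> = (3 + 18 * (s - o'))/d" by (simp add: add_divide_distrib)
  also have "3 + 18 * (s - o') = 3 * d" by (simp add: d_def algebra_simps)
  finally show ?thesis using d by simp
qed

lemma tm_nonneg: "tm a b o' i s \<ge> 0"
  unfolding tm_def using wA_nonneg[of s o'] wB_nonneg[of s o'] by (auto split: split_indicator)

lemma tm_meas[measurable]: "tm a b o' i \<in> borel_measurable borel"
  unfolding tm_def[abs_def] wA_def wB_def by measurable

lemma tm_sum: "a \<in> {1..3} \<Longrightarrow> b \<in> {1..3} \<Longrightarrow> a \<noteq> b \<Longrightarrow>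
   tm a b o' 1 s + tm a b o' 2 s + tm a b o' 3 s = 3 * indicator {o'..<o'+1/6} s"
proof -
  assume ab: "a \<in> {1..3}" "b \<in> {1..3}" "a \<noteq> b"
  have "(\<Sum>i\<in>{1..3}. tm a b o' i s) = indicator {o'..<o'+1/6} s * (\<Sum>i\<in>{1..3}. (if i = a then wA o' s else if i = b then wB o' s else 0))"
    unfolding tm_def by (simp add: sum_distrib_left)
  also have "(\<Sum>i\<in>{1..3}. (if i = a then wA o' s else if i = b then wB o' s else 0)) = wA o' s + wB o' s"
    using ab unfolding sum3 by auto
  finally show ?thesis using wAB_sum[of s o'] unfolding sum3 by (auto split: split_indicator)
qed

definition rho :: "nat \<Rightarrow> nat \<Rightarrow> nat \<Rightarrow> real" where
  "rho a b i = (if i = a then ln 2 / 2 else if i = b then 1/2 - ln 2 / 2 else 0)"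

lemma rho_nonneg: "rho a b i \<ge> 0"
  unfolding rho_def using ln_2_less_1 ln_gt_zero[of "2::real"] by auto

lemma tm_int: "a \<noteq> b \<Longrightarrow> (\<integral>\<^sup>+s. ennreal (tm a b o' i s) \<partial>lborel) = ennreal (rho a b i)"
  unfolding tm_def rho_def using wA_int[of o'] wB_int[of o'] by auto

lemma pieces_sum: fixes s :: real shows "s \<in> {0..<1} \<Longrightarrow>
  indicator {0..<0+1/6} s + indicator {1/6..<1/6+1/6} s + indicator {2/6..<2/6+1/6} s +
  indicator {3/6..<3/6+1/6} s + indicator {4/6..<4/6+1/6} s + indicator {5/6..<5/6+1/6} s = (1::real)"
  by (auto split: split_indicator)

lemma pieces_sub: fixes s :: real shows "indicator {0..<0+1/6} s + indicator {1/6..<1/6+1/6} s + indicator {2/6..<2/6+1/6} s +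
  indicator {3/6..<3/6+1/6} s + indicator {4/6..<4/6+1/6} s + indicator {5/6..<5/6+1/6} s = (indicator {0..<1} s :: real)"
  by (auto split: split_indicator)

lemma gS_gsch: "gsch gS"
proof
  fix i show "gS i \<in> borel_measurable borel" unfolding gS_def[abs_def] by measurable
  fix s show "0 \<le> gS i s" unfolding gS_def using tm_nonneg by (simp add: add_nonneg_nonneg)
next
  fix s :: real assume s: "s \<in> {0..<1}"
  have "(\<Sum>i\<in>{1..3}. gS i s) = 3 * (indicator {0..<0+1/6} s + indicator {1/6..<1/6+1/6} s + indicator {2/6..<2/6+1/6} s +
     indicator {3/6..<3/6+1/6} s + indicator {4/6..<4/6+1/6} s + indicator {5/6..<5/6+1/6} s)"
  proof -
    have "(\<Sum>i\<in>{1..3}. gS i s) = (tm 1 2 0 1 s + tm 1 2 0 2 s + tm 1 2 0 3 s) + (tm 2 1 (1/6) 1 s + tm 2 1 (1/6) 2 s + tm 2 1 (1/6) 3 s)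
       + (tm 1 3 (2/6) 1 s + tm 1 3 (2/6) 2 s + tm 1 3 (2/6) 3 s) + (tm 3 1 (3/6) 1 s + tm 3 1 (3/6) 2 s + tm 3 1 (3/6) 3 s)
       + (tm 2 3 (4/6) 1 s + tm 2 3 (4/6) 2 s + tm 2 3 (4/6) 3 s) + (tm 3 2 (5/6) 1 s + tm 3 2 (5/6) 2 s + tm 3 2 (5/6) 3 s)"
      unfolding sum3 gS_def by (simp add: algebra_simps)
    also have "\<dots> = 3 * indicator {0..<0+1/6} s + 3 * indicator {1/6..<1/6+1/6} s + 3 * indicator {2/6..<2/6+1/6} s +
     3 * indicator {3/6..<3/6+1/6} s + 3 * indicator {4/6..<4/6+1/6} s + 3 * indicator {5/6..<5/6+1/6} s"
    proof -
      have t1: "tm 1 2 0 1 s + tm 1 2 0 2 s + tm 1 2 0 3 s = 3 * indicator {0..<0+1/6} s" by (rule tm_sum) auto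
      have t2: "tm 2 1 (1/6) 1 s + tm 2 1 (1/6) 2 s + tm 2 1 (1/6) 3 s = 3 * indicator {1/6..<1/6+1/6} s" by (rule tm_sum) auto
      have t3: "tm 1 3 (2/6) 1 s + tm 1 3 (2/6) 2 s + tm 1 3 (2/6) 3 s = 3 * indicator {2/6..<2/6+1/6} s" by (rule tm_sum) auto
      have t4: "tm 3 1 (3/6) 1 s + tm 3 1 (3/6) 2 s + tm 3 1 (3/6) 3 s = 3 * indicator {3/6..<3/6+1/6} s" by (rule tm_sum) auto
      have t5: "tm 2 3 (4/6) 1 s + tm 2 3 (4/6) 2 s + tm 2 3 (4/6) 3 s = 3 * indicator {4/6..<4/6+1/6} s" by (rule tm_sum) auto
      have t6: "tm 3 2 (5/6) 1 s + tm 3 2 (5/6) 2 s + tm 3 2 (5/6) 3 s = 3 * indicator {5/6..<5/6+1/6} s" by (rule tm_sum) auto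
      show ?thesis unfolding t1 t2 t3 t4 t5 t6 ..
    qed
    finally show ?thesis by (simp add: algebra_simps)
  qed
  then show "(\<Sum>i\<in>{1..3}. gS i s) = 3" using pieces_sum[OF s] by simp
next
  fix i :: nat assume i: "i \<in> {1..3}"
  have "(\<integral>\<^sup>+s. ennreal (gS i s) * indicator {0..<1} s \<partial>lborel) = (\<integral>\<^sup>+s. ennreal (gS i s) \<partial>lborel)"
  proof (rule nn_integral_cong)
    fix s :: real
    have "gS i s = 0" if "s \<notin> {0..<1}"
      using that unfolding gS_def tm_def by (auto split: split_indicator)
    then show "ennreal (gS i s) * indicator {0..<1} s = ennreal (gS i s)" by (auto split: split_indicator)
  qed
  also have "\<dots> = (\<integral>\<^sup>+s. ennreal (tm 1 2 0 i s) + ennreal (tm 2 1 (1/6) i s) + ennreal (tm 1 3 (2/6) i s) +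
      ennreal (tm 3 1 (3/6) i s) + ennreal (tm 2 3 (4/6) i s) + ennreal (tm 3 2 (5/6) i s) \<partial>lborel)"
    unfolding gS_def by (intro nn_integral_cong) (simp add: tm_nonneg add_nonneg_nonneg ennreal_plus)
  also have "\<dots> = (\<integral>\<^sup>+s. ennreal (tm 1 2 0 i s) \<partial>lborel) + (\<integral>\<^sup>+s. ennreal (tm 2 1 (1/6) i s) \<partial>lborel) +
      (\<integral>\<^sup>+s. ennreal (tm 1 3 (2/6) i s) \<partial>lborel) + (\<integral>\<^sup>+s. ennreal (tm 3 1 (3/6) i s) \<partial>lborel) +
      (\<integral>\<^sup>+s. ennreal (tm 2 3 (4/6) i s) \<partial>lborel) + (\<integral>\<^sup>+s. ennreal (tm 3 2 (5/6) i s) \<partial>lborel)"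
    by (simp add: nn_integral_add)
  also have "\<dots> = ennreal (rho 1 2 i) + ennreal (rho 2 1 i) + ennreal (rho 1 3 i) + ennreal (rho 3 1 i) + ennreal (rho 2 3 i) + ennreal (rho 3 2 i)"
    by (simp add: tm_int)
  also have "\<dots> = ennreal (rho 1 2 i + rho 2 1 i + rho 1 3 i + rho 3 1 i + rho 2 3 i + rho 3 2 i)"
    by (simp add: ennreal_plus rho_nonneg add_nonneg_nonneg)
  also have "rho 1 2 i + rho 2 1 i + rho 1 3 i + rho 3 1 i + rho 2 3 i + rho 3 2 i = 1"
  proof -
    have "i = 1 \<or> i = 2 \<or> i = 3" using i by auto
    then show ?thesis unfolding rho_def by auto
  qed
  finally show "(\<integral>\<^sup>+s. ennreal (gS i s) * indicator {0..<1} s \<partial>lborel) = 1" by simp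
qed


lemma emeasure_piece:
  "emeasure lborel {s \<in> {o'..<o'+1/6}. x + 6 * (s - o') * y \<ge> 0} \<ge> ennreal (ell x y)"
proof -
  let ?S = "{s \<in> {o'..<o'+1/6}. x + 6 * (s - o') * y \<ge> 0}"
  have mono: "ennreal (ell x y) \<le> emeasure lborel ?S" if sub: "{l..<h} \<subseteq> ?S" and lh: "l \<le> h" "ell x y \<le> h - l" for l h
  proof -
    have "ennreal (ell x y) \<le> ennreal (h - l)" using lh by simp
    also have "\<dots> = emeasure lborel {l..<h}" using lh by simp
    also have "\<dots> \<le> emeasure lborel ?S" using sub by (intro emeasure_mono) auto
    finally show ?thesis .
  qed
  consider (pp) "0 \<le> x" "0 \<le> y" | (pn) "0 \<le> x" "y < 0" | (np) "x < 0" "0 < y" | (nn) "x < 0" "y \<le> 0" by linarith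
  then show ?thesis
  proof cases
    case pp
    have "{o'..<o'+1/6} \<subseteq> ?S" using pp by auto
    then show ?thesis using mono[of o' "o'+1/6"] pp unfolding ell_def by simp
  next
    case pn
    define m where "m = min (1/6) (x/(6*(-y)))"
    have m0: "0 \<le> m" using pn by (simp add: m_def divide_le_0_iff mult_less_0_iff)
    have "{o'..<o'+m} \<subseteq> ?S"
    proof
      fix s assume s: "s \<in> {o'..<o'+m}"
      then have "s - o' < x/(6*(-y))" "s - o' < 1/6" unfolding m_def by auto
      have c: "0 < 6*(-y)" using pn by simp
      have "(s - o') * (6*(-y)) < x" using \<open>s - o' < x/(6*(-y))\<close> pos_less_divide_eq[OF c] by blast
      then show "s \<in> ?S" using s m_def by (auto simp: algebra_simps)
    qed
    then show ?thesis using mono[of o' "o'+m"] pn m0 unfolding ell_def m_def by simp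
  next
    case np
    define m where "m = max 0 ((-x)/(6*y))"
    show ?thesis
    proof (cases "m \<le> 1/6")
      case True
      have "{o'+m..<o'+1/6} \<subseteq> ?S"
      proof
        fix s assume s: "s \<in> {o'+m..<o'+1/6}"
        then have "(-x)/(6*y) \<le> s - o'" unfolding m_def by auto
        have c: "0 < 6*y" using np by simp
        have "-x \<le> (s - o') * (6*y)" using \<open>(-x)/(6*y) \<le> s - o'\<close> pos_divide_le_eq[OF c] by blast
        then show "s \<in> ?S" using s np unfolding m_def by (auto simp: algebra_simps)
      qed
      moreover have "ell x y = 1/6 - m"
      proof -
        have mp: "(-x)/(6*y) \<ge> 0" using np by (intro divide_nonneg_pos) auto
        then have "m = (-x)/(6*y)" unfolding m_def by simp
        then show ?thesis using np True unfolding ell_def by simp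
      qed
      ultimately show ?thesis using mono[of "o'+m" "o'+1/6"] True by simp
    next
      case False
      then have "ell x y = 0" using np unfolding ell_def m_def by auto
      then show ?thesis by simp
    qed
  next
    case nn
    then have "ell x y = 0" unfolding ell_def by auto
    then show ?thesis by simp
  qed
qed


lemma gS_piece:
  assumes ab: "(a, b, o') \<in> {(1,2,0),(2,1,1/6),(1,3,2/6),(3,1,3/6),(2,3,4/6),(3,2,5/6)}"
    and s: "s \<in> {o'..<o'+1/6}"
  shows "gS i s = (if i = a then wA o' s else if i = b then wB o' s else 0)"
proof -
  have "(a, b, o') = (1,2,0) \<or> (a, b, o') = (2,1,1/6) \<or> (a, b, o') = (1,3,2/6) \<or> (a, b, o') = (3,1,3/6) \<or>
        (a, b, o') = (2,3,4/6) \<or> (a, b, o') = (3,2,5/6)" using ab by blast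
  then show ?thesis
  proof (elim disjE)
    assume "(a, b, o') = (1,2,0)" then have e: "a = 1" "b = 2" "o' = 0" by auto
    show ?thesis using s unfolding gS_def tm_def e by (simp add: indicator_def)
  next
    assume "(a, b, o') = (2,1,1/6)" then have e: "a = 2" "b = 1" "o' = 1/6" by auto
    show ?thesis using s unfolding gS_def tm_def e by (simp add: indicator_def)
  next
    assume "(a, b, o') = (1,3,2/6)" then have e: "a = 1" "b = 3" "o' = 2/6" by auto
    show ?thesis using s unfolding gS_def tm_def e by (simp add: indicator_def)
  next
    assume "(a, b, o') = (3,1,3/6)" then have e: "a = 3" "b = 1" "o' = 3/6" by auto
    show ?thesis using s unfolding gS_def tm_def e by (simp add: indicator_def)
  next
    assume "(a, b, o') = (2,3,4/6)" then have e: "a = 2" "b = 3" "o' = 4/6" by auto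
    show ?thesis using s unfolding gS_def tm_def e by (simp add: indicator_def)
  next
    assume "(a, b, o') = (3,2,5/6)" then have e: "a = 3" "b = 2" "o' = 5/6" by auto
    show ?thesis using s unfolding gS_def tm_def e by (simp add: indicator_def)
  qed
qed

definition Sp :: "(nat \<Rightarrow> real) \<Rightarrow> nat \<Rightarrow> nat \<Rightarrow> real \<Rightarrow> real set" where
  "Sp u a b o' = {s \<in> {o'..<o'+1/6}. u a + 6 * (s - o') * u b \<ge> 0}"

lemma Sp_meas[measurable]: "Sp u a b o' \<in> sets borel"
  unfolding Sp_def by measurable

lemma Sp_sub:
  assumes ab: "(a, b, o') \<in> {(1,2,0),(2,1,1/6),(1,3,2/6),(3,1,3/6),(2,3,4/6),(3,2,5/6)}"
  shows "Sp u a b o' \<subseteq> {0..<1} \<inter> {s. (\<Sum>i\<in>{1..3}. gS i s * u i) \<ge> 0}"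
proof
  fix s assume "s \<in> Sp u a b o'"
  then have s: "s \<in> {o'..<o'+1/6}" and nn: "u a + 6 * (s - o') * u b \<ge> 0" unfolding Sp_def by auto
  have ab3: "a \<in> {1,2,3}" "b \<in> {1,2,3}" "a \<noteq> b" using ab by auto
  have "(\<Sum>i\<in>{1..3}. gS i s * u i) = wA o' s * u a + wB o' s * u b"
    unfolding sum3 gS_piece[OF ab s] using ab3 by auto
  also have "\<dots> = (3 * (u a + 6 * (s - o') * u b)) * inverse (1 + 6 * (s - o'))"
    unfolding wA_def wB_def divide_inverse by (simp add: algebra_simps)
  also have "\<dots> \<ge> 0" using nn s by (intro mult_nonneg_nonneg) auto
  finally show "s \<in> {0..<1} \<inter> {s. (\<Sum>i\<in>{1..3}. gS i s * u i) \<ge> 0}" using s ab by auto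
qed


lemma Sp_in: "Sp u a b o' \<subseteq> {o'..<o'+1/6}" unfolding Sp_def by auto

lemma emeasure_Un_disj: "A \<in> sets lborel \<Longrightarrow> B \<in> sets lborel \<Longrightarrow> A \<inter> B = {} \<Longrightarrow>
  emeasure lborel (A \<union> B) = emeasure lborel A + emeasure lborel B"
  by (rule plus_emeasure[symmetric])

lemma su_gS: "sender_util 3 mu3 (mk gS) u \<ge> L3 (u 1) (u 2) (u 3)"
proof -
  interpret gsch gS by (rule gS_gsch)
  let ?E = "{0..<1} \<inter> {s. (\<Sum>i\<in>{1..3}. gS i s * u i) \<ge> 0}"
  have E[measurable]: "?E \<in> sets borel" by measurable
  let ?S1 = "Sp u 1 2 0" and ?S2 = "Sp u 2 1 (1/6)" and ?S3 = "Sp u 1 3 (2/6)"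
  let ?S4 = "Sp u 3 1 (3/6)" and ?S5 = "Sp u 2 3 (4/6)" and ?S6 = "Sp u 3 2 (5/6)"
  have sub: "?S1 \<union> (?S2 \<union> (?S3 \<union> (?S4 \<union> (?S5 \<union> ?S6)))) \<subseteq> ?E"
    using Sp_sub[of 1 2 0 u] Sp_sub[of 2 1 "1/6" u] Sp_sub[of 1 3 "2/6" u] Sp_sub[of 3 1 "3/6" u]
      Sp_sub[of 2 3 "4/6" u] Sp_sub[of 3 2 "5/6" u] by auto
  have i1: "?S1 \<subseteq> {0..<1/6}" and i2: "?S2 \<subseteq> {1/6..<2/6}" and i3: "?S3 \<subseteq> {2/6..<3/6}"
    and i4: "?S4 \<subseteq> {3/6..<4/6}" and i5: "?S5 \<subseteq> {4/6..<5/6}" and i6: "?S6 \<subseteq> {5/6..<1}"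
    using Sp_in[of u 1 2 0] Sp_in[of u 2 1 "1/6"] Sp_in[of u 1 3 "2/6"] Sp_in[of u 3 1 "3/6"]
      Sp_in[of u 2 3 "4/6"] Sp_in[of u 3 2 "5/6"] by auto
  have d5: "?S5 \<inter> ?S6 = {}" using i5 i6 by fastforce
  have d4: "?S4 \<inter> (?S5 \<union> ?S6) = {}" using i4 i5 i6 by fastforce
  have d3: "?S3 \<inter> (?S4 \<union> (?S5 \<union> ?S6)) = {}" using i3 i4 i5 i6 by fastforce
  have d2: "?S2 \<inter> (?S3 \<union> (?S4 \<union> (?S5 \<union> ?S6))) = {}" using i2 i3 i4 i5 i6 by fastforce
  have d1: "?S1 \<inter> (?S2 \<union> (?S3 \<union> (?S4 \<union> (?S5 \<union> ?S6)))) = {}" using i1 i2 i3 i4 i5 i6 by fastforce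
  have "emeasure lborel (?S1 \<union> (?S2 \<union> (?S3 \<union> (?S4 \<union> (?S5 \<union> ?S6)))))
      = emeasure lborel ?S1 + (emeasure lborel ?S2 + (emeasure lborel ?S3 + (emeasure lborel ?S4 + (emeasure lborel ?S5 + emeasure lborel ?S6))))"
    by (simp only: emeasure_Un_disj[OF _ _ d1] emeasure_Un_disj[OF _ _ d2] emeasure_Un_disj[OF _ _ d3]
        emeasure_Un_disj[OF _ _ d4] emeasure_Un_disj[OF _ _ d5] sets_lborel Sp_meas sets.Un)
  also have "\<dots> \<ge> ennreal (ell (u 1) (u 2)) + (ennreal (ell (u 2) (u 1)) + (ennreal (ell (u 1) (u 3)) +
      (ennreal (ell (u 3) (u 1)) + (ennreal (ell (u 2) (u 3)) + ennreal (ell (u 3) (u 2))))))"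
    unfolding Sp_def by (intro add_mono emeasure_piece)
  also have "ennreal (ell (u 1) (u 2)) + (ennreal (ell (u 2) (u 1)) + (ennreal (ell (u 1) (u 3)) +
      (ennreal (ell (u 3) (u 1)) + (ennreal (ell (u 2) (u 3)) + ennreal (ell (u 3) (u 2)))))) = ennreal (L3 (u 1) (u 2) (u 3))"
    unfolding L3_def by (simp add: ennreal_plus ell_nonneg add_nonneg_nonneg add.assoc)
  finally have "ennreal (L3 (u 1) (u 2) (u 3)) \<le> emeasure lborel (?S1 \<union> (?S2 \<union> (?S3 \<union> (?S4 \<union> (?S5 \<union> ?S6)))))" .
  also have "\<dots> \<le> emeasure lborel ?E" using sub by (intro emeasure_mono) auto
  finally have le: "ennreal (L3 (u 1) (u 2) (u 3)) \<le> emeasure lborel ?E" .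
  have "emeasure lborel ?E \<le> emeasure lborel {0..<1::real}" by (intro emeasure_mono) auto
  then have "emeasure lborel ?E \<noteq> top" by (metis emeasure_lborel_Ico ennreal_neq_top neq_top_trans zero_le_one)
  then have "emeasure lborel ?E = ennreal (measure lborel ?E)" by (rule emeasure_eq_ennreal_measure)
  with le have "L3 (u 1) (u 2) (u 3) \<le> measure lborel ?E" by (simp add: ennreal_le_iff)
  then show ?thesis using su_eq by simp
qed



lemma opt_le_L3: "opt_util 3 mu3 u \<le> L3 (u 1) (u 2) (u 3) + 1/2"
proof -
  obtain c1 c2 c3 where c: "certp (u 1) (u 2) (u 3) c1 c2 c3" "c1 + c2 + c3 \<le> 3 * L3 (u 1) (u 2) (u 3) + 3/2"
    using good_all[of "u 1" "u 2" "u 3"] unfolding good_def by blast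
  define c where "c = (\<lambda>i::nat. if i = 1 then c1 else if i = 2 then c2 else c3)"
  have su: "sender_util 3 mu3 \<pi> u \<le> (c1 + c2 + c3) / 3" if sch: "is_scheme 3 \<pi>" for \<pi>
  proof -
    have "sender_util 3 mu3 \<pi> u \<le> (\<Sum>i\<in>{1..3}. c i) / 3"
    proof (rule su_cert[OF sch])
      fix i :: nat assume "i \<in> {1..3}" then show "c i \<ge> 0" using c(1) unfolding certp_def c_def by auto
    next
      fix p :: "nat \<Rightarrow> real"
      assume p: "\<And>i. i \<in> {1..3} \<Longrightarrow> 0 \<le> p i" "(\<Sum>i\<in>{1..3}. p i) = 1" "(\<Sum>i\<in>{1..3}. p i * u i) \<ge> 0"
      have "p 1 * c1 + p 2 * c2 + p 3 * c3 \<ge> 1"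
        using c(1) p(1)[of 1] p(1)[of 2] p(1)[of 3] p(2) p(3) unfolding certp_def sum3 by auto
      then show "(\<Sum>i\<in>{1..3}. p i * c i) \<ge> 1" unfolding sum3 c_def by simp
    qed
    then show ?thesis unfolding sum3 c_def by simp
  qed
  have "opt_util 3 mu3 u \<le> (c1 + c2 + c3) / 3"
    unfolding opt_util_def by (rule cSUP_least) (use some_scheme su in auto)
  then show ?thesis using c(2) by simp
qed

lemma regret_gS: "regret_AR 3 mu3 (mk gS) \<le> 1/2"
  unfolding regret_AR_def
proof (rule cSUP_least)
  fix u :: "nat \<Rightarrow> real"
  show "opt_util 3 mu3 u - sender_util 3 mu3 (mk gS) u \<le> 1/2"
    using opt_le_L3[of u] su_gS[of u] by linarith
qed simp

lemma gS_scheme: "is_scheme 3 (mk gS)"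
proof -
  interpret gsch gS by (rule gS_gsch)
  show ?thesis by (rule scheme)
qed

theorem proposition2:
  shows "Reg_AR 3 (\<lambda>_. 1/3) = 1/2"
proof (rule antisym)
  have bb: "bdd_below (regret_AR 3 mu3 ` {\<pi>. is_scheme 3 \<pi>})"
  proof (rule bdd_belowI[where m="1/2"])
    fix x assume "x \<in> regret_AR 3 mu3 ` {\<pi>. is_scheme 3 \<pi>}"
    then obtain \<pi> where "is_scheme 3 \<pi>" "x = regret_AR 3 mu3 \<pi>" by auto
    then show "1/2 \<le> x" using regret_lower by simp
  qed
  have "(INF \<pi>\<in>{\<pi>. is_scheme 3 \<pi>}. regret_AR 3 mu3 \<pi>) \<le> regret_AR 3 mu3 (mk gS)"
    by (rule cINF_lower[OF bb]) (use gS_scheme in simp)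
  then show "Reg_AR 3 (\<lambda>_. 1/3) \<le> 1/2"
    unfolding Reg_AR_def using regret_gS by linarith
  show "1/2 \<le> Reg_AR 3 (\<lambda>_. 1/3)"
    unfolding Reg_AR_def
    by (rule cINF_greatest) (use gS_scheme regret_lower in auto)
qed

end
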